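(* Let $\mathcal N$ and $\mathcal M$ be quantum channels satisfying $s$-detailed balance with respect to $\rho_\beta$, and suppose $\mathbb V_{\rho_\beta}(\mathcal M)>0$. Let $\rho$ be an arbitrary initial state and $\epsilon,\eta>0$. Set $T_{burn}=t_{mix}(\eta)$ and let $K$ satisfy $K\ge\frac{2\mathbb V_{\rho_\beta}(\mathcal M)}{\epsilon^2\eta}\,t_{aut,K}$. Then the outcomes of the single-trajectory algorithm satisfy $$\Pr_\rho\left(\left|\frac1K\sum_{t=1}^Ke_t-\mathbb E_{\rho_\beta}(\mathcal M)\right|\ge\epsilon\right)\le2\eta.$$
   Context: $H$ is an $n$-qubit Hermitian operator, $\beta>0$, $\rho_\beta=e^{-\beta H}/\operatorname{tr}(e^{-\beta H})$. For a channel $\mathcal T(X)=\sum_uK_uXK_u^\dagger$, $\mathcal T^\dagger(X)=\sum_uK_u^\dagger XK_u$. $\langle A,B\rangle_s=\operatorname{tr}(A^\dagger\rho_\beta^{1-s}B\rho_\beta^s)$; $\mathcal T$ satisfies $s$-detailed balance if $\langle A,\mathcal T^\dagger(B)\rangle_s=\langle\mathcal T^\dagger(A),B\rangle_s$ for all $A,B$. $\mathcal M$ has Kraus operators $\{O_u\}_u$ indexed by finitely many real outcomes $u$; applied to a state it gives outcome $u$ with probability $\operatorname{tr}(O_u\rho O_u^\dagger)$ and post-state $\propto O_u\rho O_u^\dagger$. $\mathbb E_{\rho_\beta}(\mathcal M)=\sum_uu\operatorname{tr}(O_u\rho_\beta O_u^\dagger)$, $\mathbb V_{\rho_\beta}(\mathcal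 M)=\sum_u|u-\mathbb E_{\rho_\beta}(\mathcal M)|^2\operatorname{tr}(O_u\rho_\beta O_u^\dagger)$, $\widehat{\mathcal M}(X)=\sum_u(u-\mathbb E_{\rho_\beta}(\mathcal M))O_uXO_u^\dagger$, $\mathcal E=\mathcal M\circ\mathcal N\circ\mathcal M$, $\widehat{\mathcal E}=\mathcal M\circ\mathcal N\circ\widehat{\mathcal M}$, $\mathrm{Cor}_{\rho_\beta}(\mathcal E^t)=\operatorname{tr}(\widehat{\mathcal E}\circ\mathcal E^t\circ\widehat{\mathcal E}(\rho_\beta))$, $C(t)=\mathrm{Cor}_{\rho_\beta}(\mathcal E^t)/\mathbb V_{\rho_\beta}(\mathcal M)$, $t_{aut,K}=\frac12+\sum_{t=1}^K(1-\frac tK)C(t-1)$. Mixing time $t_{mix}(\eta)=\min\{t\in\mathbb N:\|\mathcal N^t(\sigma)-\rho_\beta\|_1\le\eta$ for all states $\sigma\}$. Single-trajectory algorithm with inputs $\mathcal N,\mathcal M,\rho,T_{burn},K$: apply $\mathcal N$ $T_{burn}$ times to $\rho$; then for $t=1,\dots,K$ apply $\mathcal M$ (record outcome $e_t$), then $\mathcal N$, then $\mathcal M$ (outcome discarded). $\Pr_\rho$ is probability over all outcomes of this process started from $\rho$. *)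

theory Defs
  imports "HOL-Analysis.Analysis"
begin

(* Operators on the Hilbert space C^d, d = CARD('d) (= 2^n for n qubits),
   are represented as matrices of type complex^'d^'d. *)
type_synonym 'd cmat = "complex^'d^'d"

definition adj :: "'d::finite cmat \<Rightarrow> 'd cmat" where
  "adj A = (\<chi> i j. cnj (A $ j $ i))"

definition cscale :: "complex \<Rightarrow> 'd::finite cmat \<Rightarrow> 'd cmat" where
  "cscale c A = (\<chi> i j. c * A $ i $ j)"

definition hermitian :: "'d::finite cmat \<Rightarrow> bool" where
  "hermitian A \<longleftrightarrow> adj A = A"

definition unitary :: "'d::finite cmat \<Rightarrow> bool" where
  "unitary U \<longleftrightarrow> adj U ** U = mat 1 \<and> U ** adj U = mat 1"

definition diagm :: "('d::finite \<Rightarrow> complex) \<Rightarrow> 'd cmat" where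
  "diagm f = (\<chi> i j. if i = j then f i else 0)"

definition psd :: "'d::finite cmat \<Rightarrow> bool" where
  "psd A \<longleftrightarrow> hermitian A \<and>
     (\<forall>v::complex^'d. 0 \<le> Re (\<Sum>i\<in>UNIV. cnj (v $ i) * (A *v v) $ i))"

definition density_op :: "'d::finite cmat \<Rightarrow> bool" where
  "density_op \<sigma> \<longleftrightarrow> psd \<sigma> \<and> trace \<sigma> = 1"

definition mfun :: "(real \<Rightarrow> real) \<Rightarrow> 'd::finite cmat \<Rightarrow> 'd cmat" where
  "mfun f A = (let p = (SOME p :: 'd cmat \<times> ('d \<Rightarrow> real).
                   unitary (fst p) \<and> A = fst p ** diagm (\<lambda>i. complex_of_real (snd p i)) ** adj (fst p))
               in fst p ** diagm (\<lambda>i. complex_of_real (f (snd p i))) ** adj (fst p))"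

definition gibbs :: "real \<Rightarrow> 'd::finite cmat \<Rightarrow> 'd cmat" where
  "gibbs \<beta> H = cscale (1 / trace (mfun (\<lambda>x. exp (- \<beta> * x)) H)) (mfun (\<lambda>x. exp (- \<beta> * x)) H)"

definition mpowr :: "'d::finite cmat \<Rightarrow> real \<Rightarrow> 'd cmat" where
  "mpowr A s = mfun (\<lambda>x. x powr s) A"

definition trace_norm :: "'d::finite cmat \<Rightarrow> real" where
  "trace_norm X = Re (trace (mfun sqrt (adj X ** X)))"

definition inner_s :: "real \<Rightarrow> 'd::finite cmat \<Rightarrow> 'd cmat \<Rightarrow> 'd cmat \<Rightarrow> complex" where
  "inner_s s \<rho> A B = trace (adj A ** mpowr \<rho> (1 - s) ** B ** mpowr \<rho> s)"

definition kraus_chan :: "'i set \<Rightarrow> ('i \<Rightarrow> 'd::finite cmat) \<Rightarrow> 'd cmat \<Rightarrow> 'd cmat" where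
  "kraus_chan I K X = (\<Sum>i\<in>I. K i ** X ** adj (K i))"

definition kraus_dual :: "'i set \<Rightarrow> ('i \<Rightarrow> 'd::finite cmat) \<Rightarrow> 'd cmat \<Rightarrow> 'd cmat" where
  "kraus_dual I K X = (\<Sum>i\<in>I. adj (K i) ** X ** K i)"

definition is_channel :: "'i set \<Rightarrow> ('i \<Rightarrow> 'd::finite cmat) \<Rightarrow> bool" where
  "is_channel I K \<longleftrightarrow> finite I \<and> (\<Sum>i\<in>I. adj (K i) ** K i) = mat 1"

definition detailed_balance :: "real \<Rightarrow> 'd::finite cmat \<Rightarrow> 'i set \<Rightarrow> ('i \<Rightarrow> 'd cmat) \<Rightarrow> bool" where
  "detailed_balance s \<rho> I K \<longleftrightarrow>
     (\<forall>A B. inner_s s \<rho> A (kraus_dual I K B) = inner_s s \<rho> (kraus_dual I K A) B)"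

(* Measurement M with outcomes u \<in> U (finite set of reals) and Kraus operators Om u *)
definition meas_mean :: "'d::finite cmat \<Rightarrow> real set \<Rightarrow> (real \<Rightarrow> 'd cmat) \<Rightarrow> real" where
  "meas_mean \<rho> U Om = (\<Sum>u\<in>U. u * Re (trace (Om u ** \<rho> ** adj (Om u))))"

definition meas_var :: "'d::finite cmat \<Rightarrow> real set \<Rightarrow> (real \<Rightarrow> 'd cmat) \<Rightarrow> real" where
  "meas_var \<rho> U Om = (\<Sum>u\<in>U. \<bar>u - meas_mean \<rho> U Om\<bar>^2 * Re (trace (Om u ** \<rho> ** adj (Om u))))"

definition meas_hat :: "'d::finite cmat \<Rightarrow> real set \<Rightarrow> (real \<Rightarrow> 'd cmat) \<Rightarrow> 'd cmat \<Rightarrow> 'd cmat" where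
  "meas_hat \<rho> U Om X = (\<Sum>u\<in>U. cscale (complex_of_real (u - meas_mean \<rho> U Om)) (Om u ** X ** adj (Om u)))"

definition chan_E :: "'i set \<Rightarrow> ('i \<Rightarrow> 'd::finite cmat) \<Rightarrow> real set \<Rightarrow> (real \<Rightarrow> 'd cmat) \<Rightarrow> 'd cmat \<Rightarrow> 'd cmat" where
  "chan_E I K U Om = kraus_chan U Om \<circ> kraus_chan I K \<circ> kraus_chan U Om"

definition chan_E_hat :: "'d::finite cmat \<Rightarrow> 'i set \<Rightarrow> ('i \<Rightarrow> 'd cmat) \<Rightarrow> real set \<Rightarrow> (real \<Rightarrow> 'd cmat) \<Rightarrow> 'd cmat \<Rightarrow> 'd cmat" where
  "chan_E_hat \<rho> I K U Om = kraus_chan U Om \<circ> kraus_chan I K \<circ> meas_hat \<rho> U Om"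

definition corr :: "'d::finite cmat \<Rightarrow> 'i set \<Rightarrow> ('i \<Rightarrow> 'd cmat) \<Rightarrow> real set \<Rightarrow> (real \<Rightarrow> 'd cmat) \<Rightarrow> nat \<Rightarrow> real" where
  "corr \<rho> I K U Om t =
     Re (trace ((chan_E_hat \<rho> I K U Om \<circ> (chan_E I K U Om ^^ t) \<circ> chan_E_hat \<rho> I K U Om) \<rho>))"

definition autocorr :: "'d::finite cmat \<Rightarrow> 'i set \<Rightarrow> ('i \<Rightarrow> 'd cmat) \<Rightarrow> real set \<Rightarrow> (real \<Rightarrow> 'd cmat) \<Rightarrow> nat \<Rightarrow> real" where
  "autocorr \<rho> I K U Om t = corr \<rho> I K U Om t / meas_var \<rho> U Om"

definition t_aut :: "'d::finite cmat \<Rightarrow> 'i set \<Rightarrow> ('i \<Rightarrow> 'd cmat) \<Rightarrow> real set \<Rightarrow> (real \<Rightarrow> 'd cmat) \<Rightarrow> nat \<Rightarrow> real" where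
  "t_aut \<rho> I K U Om KK = 1/2 + (\<Sum>t=1..KK. (1 - real t / real KK) * autocorr \<rho> I K U Om (t - 1))"

definition t_mix :: "'d::finite cmat \<Rightarrow> 'i set \<Rightarrow> ('i \<Rightarrow> 'd cmat) \<Rightarrow> real \<Rightarrow> nat" where
  "t_mix \<rho> I K \<eta> = (LEAST t. \<forall>\<sigma>. density_op \<sigma> \<longrightarrow> trace_norm ((kraus_chan I K ^^ t) \<sigma> - \<rho>) \<le> \<eta>)"

(* Unnormalised post-measurement operator of the loop of the single-trajectory
   algorithm after recording outcomes us = [e_1,...,e_k]:
   each round applies M with recorded outcome u (O_u . O_u^\<dagger>), then N,
   then M with outcome discarded (the channel M). *)
fun traj :: "'i set \<Rightarrow> ('i \<Rightarrow> 'd::finite cmat) \<Rightarrow> real set \<Rightarrow> (real \<Rightarrow> 'd cmat) \<Rightarrow> real list \<Rightarrow> 'd cmat \<Rightarrow> 'd cmat" where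
  "traj I K U Om [] \<sigma> = \<sigma>"
| "traj I K U Om (u # us) \<sigma> = traj I K U Om us (kraus_chan U Om (kraus_chan I K (Om u ** \<sigma> ** adj (Om u))))"

(* Pr_rho(P(e_1,...,e_KK)) for the single-trajectory algorithm with burn-in Tburn *)
definition traj_prob :: "'i set \<Rightarrow> ('i \<Rightarrow> 'd::finite cmat) \<Rightarrow> real set \<Rightarrow> (real \<Rightarrow> 'd cmat) \<Rightarrow> 'd cmat \<Rightarrow> nat \<Rightarrow> nat \<Rightarrow> (real list \<Rightarrow> bool) \<Rightarrow> real" where
  "traj_prob I K U Om \<rho> Tburn KK P =
     (\<Sum>us\<in>{us. set us \<subseteq> U \<and> length us = KK \<and> P us}.
        Re (trace (traj I K U Om us ((kraus_chan I K ^^ Tburn) \<rho>))))"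

end

theory Submission
  imports Defs
begin


lemma adj_nth[simp]: "adj A $ i $ j = cnj (A $ j $ i)" by (simp add: adj_def)
lemma cscale_nth[simp]: "cscale c A $ i $ j = c * A $ i $ j" by (simp add: cscale_def)
lemma diagm_nth[simp]: "diagm f $ i $ j = (if i = j then f i else 0)" by (simp add: diagm_def)
lemma mmult_nth: "(A ** B) $ i $ j = (\<Sum>k\<in>UNIV. A $ i $ k * B $ k $ j)"
  by (simp add: matrix_matrix_mult_def)
lemma mat_nth: "(mat c :: 'a::zero^'n^'n) $ i $ j = (if i = j then c else 0)"
  by (simp add: mat_def)
lemma mv_nth: "(A *v x) $ i = (\<Sum>j\<in>UNIV. A $ i $ j * x $ j)"
  by (simp add: matrix_vector_mult_def)
lemma trace_nth: "trace A = (\<Sum>i\<in>UNIV. A $ i $ i)" by (simp add: trace_def)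

lemma adj_adj[simp]: "adj (adj A) = A" by (simp add: vec_eq_iff)
lemma adj_mult: "adj (A ** B) = adj B ** adj (A::'d::finite cmat)"
  by (simp add: vec_eq_iff mmult_nth mult.commute)
lemma adj_add: "adj (A + B) = adj A + adj B" by (simp add: vec_eq_iff)
lemma adj_diff: "adj (A - B) = adj A - adj B" by (simp add: vec_eq_iff)
lemma adj_sum: "adj (\<Sum>x\<in>S. f x) = (\<Sum>x\<in>S. adj (f x))"
  by (induct S rule: infinite_finite_induct) (auto simp: adj_add vec_eq_iff)
lemma adj_mat1[simp]: "adj (mat 1 :: 'd::finite cmat) = mat 1" by (simp add: vec_eq_iff mat_nth)
lemma adj_diagm: "adj (diagm f) = diagm (\<lambda>i. cnj (f i))" by (simp add: vec_eq_iff)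
lemma adj_cscale: "adj (cscale c A) = cscale (cnj c) (adj A)" by (simp add: vec_eq_iff)

lemma sum_nth2: "(\<Sum>x\<in>S. f x) $ i $ j = (\<Sum>x\<in>S. f x $ i $ j)"
  by (induct S rule: infinite_finite_induct) auto

definition vdot :: "complex^'d::finite \<Rightarrow> complex^'d \<Rightarrow> complex" where
  "vdot x y = (\<Sum>i\<in>UNIV. cnj (x $ i) * y $ i)"

lemma vdot_adj: "vdot x (A *v y) = vdot (adj A *v x) y"
proof -
  have "vdot x (A *v y) = (\<Sum>i\<in>UNIV. \<Sum>j\<in>UNIV. cnj (x $ i) * A $ i $ j * y $ j)"
    by (simp add: vdot_def mv_nth sum_distrib_left mult.assoc)
  also have "\<dots> = (\<Sum>j\<in>UNIV. \<Sum>i\<in>UNIV. cnj (x $ i) * A $ i $ j * y $ j)"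
    by (rule sum.swap)
  also have "\<dots> = vdot (adj A *v x) y"
    by (simp add: vdot_def mv_nth sum_distrib_left sum_distrib_right mult.commute mult.left_commute)
  finally show ?thesis .
qed

lemma vdot_conj: "vdot y x = cnj (vdot x y)"
  by (simp add: vdot_def mult.commute)
lemma vdot_add_right: "vdot x (y + z) = vdot x y + vdot x z"
  by (simp add: vdot_def distrib_left sum.distrib)
lemma vdot_add_left: "vdot (x + y) z = vdot x z + vdot y z"
  by (simp add: vdot_def distrib_right sum.distrib)
lemma vdot_diff_right: "vdot x (y - z) = vdot x y - vdot x z"
  by (simp add: vdot_def right_diff_distrib sum_subtractf)
lemma vdot_diff_left: "vdot (x - y) z = vdot x z - vdot y z"
  by (simp add: vdot_def left_diff_distrib sum_subtractf)
lemma vdot_scale_right: "vdot x (c *s y) = c * vdot x y"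
  by (simp add: vdot_def sum_distrib_left mult.left_commute)
lemma vdot_scale_left: "vdot (c *s x) y = cnj c * vdot x y"
  by (simp add: vdot_def sum_distrib_left mult.assoc)
lemma vdot_zero_right[simp]: "vdot x 0 = 0" by (simp add: vdot_def)
lemma vdot_zero_left[simp]: "vdot 0 x = 0" by (simp add: vdot_def)
lemma vdot_sum_right: "vdot x (\<Sum>v\<in>S. f v) = (\<Sum>v\<in>S. vdot x (f v))"
  by (induct S rule: infinite_finite_induct) (auto simp: vdot_add_right)

lemma vdot_self: "vdot x x = complex_of_real (norm x ^ 2)"
proof -
  have "vdot x x = (\<Sum>i\<in>UNIV. complex_of_real (cmod (x $ i) ^ 2))"
    unfolding vdot_def
    by (rule sum.cong) (auto simp: complex_norm_square mult.commute simp del: of_real_power)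
  also have "\<dots> = complex_of_real (norm x ^ 2)"
    by (simp add: norm_vec_def L2_set_def sum_nonneg del: of_real_power flip: of_real_sum)
  finally show ?thesis .
qed

lemma vdot_self_eq0: "vdot x x = 0 \<longleftrightarrow> x = 0"
  by (simp add: vdot_self)

lemma mv_add: "A *v (x + y) = A *v x + A *v (y :: complex^'d::finite)"
  by (simp add: vec_eq_iff mv_nth distrib_left sum.distrib)
lemma mv_diff: "A *v (x - y) = A *v x - A *v (y :: complex^'d::finite)"
  by (simp add: vec_eq_iff mv_nth right_diff_distrib sum_subtractf)
lemma mv_scale: "A *v (c *s x) = c *s (A *v (x :: complex^'d::finite))"
  by (simp add: vec_eq_iff mv_nth sum_distrib_left mult.left_commute)

lemma herm_vdot: "hermitian A \<Longrightarrow> vdot x (A *v y) = vdot (A *v x) y"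
  by (simp add: hermitian_def vdot_adj)

lemma herm_vdot_real: "hermitian A \<Longrightarrow> Im (vdot x (A *v x)) = 0"
  using herm_vdot[of A x x] vdot_conj[of "A *v x" x]
  by (metis Im_complex_of_real complex_cnj_complex_of_real complex_eq_cancel_iff2 complex_is_Real_iff
        Reals_cnj_iff)

lemma continuous_on_vdot:
  "continuous_on S (\<lambda>x::complex^'d::finite. vdot (f x) (g x))"
  if "continuous_on S f" "continuous_on S g"
proof -
  have c: "continuous_on S (\<lambda>x. h x $ i)" if "continuous_on S h" for h :: "_ \<Rightarrow> complex^'d" and i
    using continuous_on_compose2[OF linear_continuous_on[OF bounded_linear_vec_nth] that] by auto
  show ?thesis unfolding vdot_def
    by (intro continuous_intros c that)
qed

lemma continuous_on_mv: "continuous_on S (\<lambda>x::complex^'d::finite. A *v x)"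
  by (intro linear_continuous_on) (simp add: matrix_vector_mul_bounded_linear)

lemma vdot_scale_scale_real: "vdot (complex_of_real r *s x) (A *v (complex_of_real r *s x)) = complex_of_real (r^2) * vdot x (A *v x)"
  by (simp add: mv_scale vdot_scale_left vdot_scale_right power2_eq_square)

lemma herm_eig_exists:
  fixes A :: "'d::finite cmat"
  assumes h: "hermitian A" and S: "finite S"
    and inv: "\<And>v x. v \<in> S \<Longrightarrow> vdot v x = 0 \<Longrightarrow> vdot v (A *v x) = 0"
    and x0: "x0 \<noteq> 0" "\<And>v. v \<in> S \<Longrightarrow> vdot v x0 = 0"
  shows "\<exists>x c. vdot x x = 1 \<and> (\<forall>v\<in>S. vdot v x = 0) \<and> A *v x = complex_of_real c *s x"
proof -
  define C where "C = {x. vdot x x = 1 \<and> (\<forall>v\<in>S. vdot v x = 0)}"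
  define f where "f x = Re (vdot x (A *v x))" for x
  have "closed C"
  proof -
    have "C = {x. vdot x x = 1} \<inter> (\<Inter>v\<in>S. {x. vdot v x = 0})" by (auto simp: C_def)
    moreover have "closed {x. vdot x x = 1}"
      by (intro closed_Collect_eq continuous_on_vdot continuous_on_id continuous_on_const)
    moreover have "closed {x. vdot v x = 0}" for v
      by (intro closed_Collect_eq continuous_on_vdot continuous_on_id continuous_on_const)
    ultimately show ?thesis by auto
  qed
  moreover have "bounded C"
  proof -
    have "C \<subseteq> cball 0 1"
    proof
      fix x assume "x \<in> C"
      then have "complex_of_real (norm x ^ 2) = complex_of_real 1" using vdot_self[of x] by (auto simp: C_def)
      then have "norm x ^ 2 = 1" by (simp only: of_real_eq_iff)
      then have "norm x = 1" using norm_ge_zero[of x] by (auto simp: power2_eq_1_iff)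
      then show "x \<in> cball 0 1" by simp
    qed
    then show ?thesis using bounded_cball bounded_subset by blast
  qed
  ultimately have cC: "compact C" using compact_eq_bounded_closed by blast
  define r where "r = norm x0"
  have r: "r > 0" using x0 by (simp add: r_def)
  have "complex_of_real (1/r) *s x0 \<in> C"
  proof -
    have "vdot (complex_of_real (1/r) *s x0) (complex_of_real (1/r) *s x0) = 1"
      using r vdot_self[of x0] by (simp add: vdot_scale_left vdot_scale_right r_def power2_eq_square
          flip: of_real_mult)
    then show ?thesis using x0(2) by (auto simp: C_def vdot_scale_right)
  qed
  then have Cne: "C \<noteq> {}" by auto
  have "continuous_on C f" unfolding f_def
    by (intro continuous_intros continuous_on_vdot continuous_on_id continuous_on_mv)
  then obtain x where xC: "x \<in> C" and xmax: "\<And>y. y \<in> C \<Longrightarrow> f y \<le> f x"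
    using continuous_attains_sup[OF cC Cne] by blast
  define c where "c = vdot x (A *v x)"
  have c_real: "c = complex_of_real (f x)"
    using herm_vdot_real[OF h, of x] by (simp add: c_def f_def complex_eq_iff)
  define y where "y = A *v x - c *s x"
  have xx: "vdot x x = 1" and xS: "\<And>v. v \<in> S \<Longrightarrow> vdot v x = 0" using xC by (auto simp: C_def)
  have xy: "vdot x y = 0" unfolding y_def by (simp add: vdot_diff_right vdot_scale_right xx c_def)
  have yx: "vdot y x = 0" using xy vdot_conj by (metis complex_cnj_zero)
  have Sy: "vdot v y = 0" if "v \<in> S" for v
    unfolding y_def using inv[OF that xS[OF that]] xS[OF that]
    by (simp add: vdot_diff_right vdot_scale_right)
  have Ax: "A *v x = y + c *s x" by (simp add: y_def)
  have yAx: "vdot y (A *v x) = vdot y y"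
    by (simp add: Ax vdot_add_right vdot_scale_right yx)
  have xAy: "vdot x (A *v y) = vdot y y"
    by (simp add: herm_vdot[OF h] Ax vdot_add_left vdot_scale_left xy)
  define n where "n = norm y ^ 2"
  define q where "q = Re (vdot y (A *v y))"
  have yy: "vdot y y = complex_of_real n" by (simp add: n_def vdot_self)
  have n0: "n \<ge> 0" by (simp add: n_def)
  have key: "2 * t * n \<le> t^2 * (f x * n - q)" if t: "t > 0" for t
  proof -
    define w where "w = x + complex_of_real t *s y"
    have ww: "vdot w w = complex_of_real (1 + t^2 * n)"
      by (simp add: w_def vdot_add_left vdot_add_right vdot_scale_left vdot_scale_right xx xy yx yy
          power2_eq_square)
    have wA: "Re (vdot w (A *v w)) = f x + 2 * t * n + t^2 * q"
    proof -
      have "vdot w (A *v w) = c + complex_of_real t * vdot x (A *v y) + complex_of_real t * vdot y (A *v x)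
          + complex_of_real t * complex_of_real t * vdot y (A *v y)"
        by (simp add: w_def mv_add mv_scale vdot_add_left vdot_add_right vdot_scale_left
            vdot_scale_right c_def algebra_simps)
      then show ?thesis by (simp add: xAy yAx yy c_real q_def power2_eq_square)
    qed
    have Sw: "\<forall>v\<in>S. vdot v w = 0"
      by (simp add: w_def vdot_add_right vdot_scale_right xS Sy)
    define m where "m = sqrt (1 + t^2 * n)"
    have tn: "0 \<le> t^2 * n" using n0 by simp
    have m: "m > 0" "m^2 = 1 + t^2 * n" using tn by (auto simp: m_def)
    have "complex_of_real (1/m) *s w \<in> C"
    proof -
      have "vdot (complex_of_real (1/m) *s w) (complex_of_real (1/m) *s w) = 1"
      proof -
        have "vdot w w = complex_of_real (m * m)" using ww m by (simp add: power2_eq_square)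
        then show ?thesis using m
          by (simp add: vdot_scale_left vdot_scale_right flip: of_real_mult)
      qed
      then show ?thesis using Sw by (auto simp: C_def vdot_scale_right)
    qed
    then have "f (complex_of_real (1/m) *s w) \<le> f x" by (rule xmax)
    then have "(1/m)^2 * Re (vdot w (A *v w)) \<le> f x"
      unfolding f_def vdot_scale_scale_real[of "1/m" w A] by simp
    then have "Re (vdot w (A *v w)) \<le> f x * m^2"
    proof -
      have "Re (vdot w (A *v w)) = m^2 * ((1/m)^2 * Re (vdot w (A *v w)))" using m(1) by (simp add: power2_eq_square)
      also have "\<dots> \<le> m^2 * f x" using \<open>(1/m)^2 * Re (vdot w (A *v w)) \<le> f x\<close> by (intro mult_left_mono) auto
      finally show ?thesis by (simp add: mult.commute)
    qed
    also have "f x * m^2 = f x + t^2 * (f x * n)" using m by (simp add: algebra_simps)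
    finally show ?thesis using wA by (simp add: algebra_simps)
  qed
  have "n = 0"
  proof (rule ccontr)
    assume "n \<noteq> 0"
    then have np: "n > 0" using n0 by simp
    define K where "K = \<bar>f x * n - q\<bar> + 1"
    have K: "K > 0" "f x * n - q \<le> K" by (auto simp: K_def)
    have tp: "n / K > 0" using np K by simp
    have "2 * (n/K) * n \<le> (n/K)^2 * (f x * n - q)" using key[OF tp] .
    also have "\<dots> \<le> (n/K)^2 * K" using K by (intro mult_left_mono) auto
    also have "\<dots> = n * (n / K)" using K by (simp add: power2_eq_square field_simps)
    finally have "2 * (n/K) * n \<le> n * (n/K)" .
    moreover have "n * (n/K) > 0" using np tp by (rule mult_pos_pos)
    moreover have "2 * (n/K) * n = 2 * (n * (n/K))" by (simp only: mult_ac)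
    ultimately show False by linarith
  qed
  then have "y = 0" using n_def by simp
  then have "A *v x = complex_of_real (f x) *s x" using Ax c_real by simp
  then show ?thesis using xx xS by blast
qed

lemma orth_eig_family:
  fixes A :: "'d::finite cmat"
  assumes h: "hermitian A"
  shows "k \<le> CARD('d) \<Longrightarrow> \<exists>S. finite S \<and> card S = k \<and>
     (\<forall>v\<in>S. vdot v v = 1 \<and> (\<exists>c::real. A *v v = complex_of_real c *s v)) \<and>
     (\<forall>v\<in>S. \<forall>w\<in>S. v \<noteq> w \<longrightarrow> vdot v w = 0)"
proof (induct k)
  case 0
  then show ?case by (intro exI[of _ "{}"]) auto
next
  case (Suc k)
  then obtain S where S: "finite S" "card S = k"
    and ev: "\<forall>v\<in>S. vdot v v = 1 \<and> (\<exists>c::real. A *v v = complex_of_real c *s v)"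
    and orth: "\<forall>v\<in>S. \<forall>w\<in>S. v \<noteq> w \<longrightarrow> vdot v w = 0" by auto
  have "vec.span S \<noteq> UNIV"
  proof
    assume sp: "vec.span S = UNIV"
    have "vec.dim (UNIV :: (complex^'d) set) \<le> card S"
      using vec.dim_le_card[of UNIV S] sp S(1) by auto
    then show False using vec_dim_card[where 'a=complex and 'n='d] S(2) Suc(2) by simp
  qed
  then obtain x where x: "x \<notin> vec.span S" by auto
  define x0 where "x0 = x - (\<Sum>v\<in>S. vdot v x *s v)"
  have "(\<Sum>v\<in>S. vdot v x *s v) \<in> vec.span S"
    by (intro vec.span_sum vec.span_scale vec.span_base)
  then have x0nz: "x0 \<noteq> 0"
  proof (intro notI)
    assume "x0 = 0"
    then have "x = (\<Sum>v\<in>S. vdot v x *s v)" unfolding x0_def by (simp only: right_minus_eq)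
    then show False using x \<open>(\<Sum>v\<in>S. vdot v x *s v) \<in> vec.span S\<close> by simp
  qed
  have x0S: "vdot w x0 = 0" if w: "w \<in> S" for w
  proof -
    have "(\<Sum>v\<in>S. vdot w (vdot v x *s v)) = (\<Sum>v\<in>S. if v = w then vdot w x else 0)"
      using orth ev w by (intro sum.cong) (auto simp: vdot_scale_right)
    also have "\<dots> = vdot w x" using S(1) w by simp
    finally show ?thesis by (simp add: x0_def vdot_diff_right vdot_sum_right)
  qed
  have inv: "vdot v (A *v y) = 0" if "v \<in> S" "vdot v y = 0" for v y
  proof -
    have "\<exists>c::real. A *v v = complex_of_real c *s v" using ev that(1) by simp
    then obtain c :: real where c: "A *v v = complex_of_real c *s v" ..
    show ?thesis using that(2) by (simp add: herm_vdot[OF h] c vdot_scale_left)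
  qed
  obtain y c where y: "vdot y y = 1" "\<forall>v\<in>S. vdot v y = 0" "A *v y = complex_of_real c *s y"
    using herm_eig_exists[OF h S(1) inv x0nz x0S] by blast
  have yS: "y \<notin> S" using y(1,2) by auto
  show ?case
  proof (intro exI[of _ "insert y S"] conjI)
    show "finite (insert y S)" using S by simp
    show "card (insert y S) = Suc k" using S yS by simp
    show "\<forall>v\<in>insert y S. vdot v v = 1 \<and> (\<exists>c::real. A *v v = complex_of_real c *s v)"
      using ev y by auto
    show "\<forall>v\<in>insert y S. \<forall>w\<in>insert y S. v \<noteq> w \<longrightarrow> vdot v w = 0"
    proof (intro ballI impI)
      fix v w assume v: "v \<in> insert y S" and w: "w \<in> insert y S" and vw: "v \<noteq> w"
      show "vdot v w = 0"
      proof (cases "v = y")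
        case True then have "w \<in> S" using w vw by auto
        then have "vdot w v = 0" using y(2) True by auto
        then show ?thesis using vdot_conj[of v w] by simp
      next
        case False
        then have vS: "v \<in> S" using v by auto
        show ?thesis
        proof (cases "w = y")
          case True then show ?thesis using y(2) vS by auto
        next
          case False then show ?thesis using orth vS w vw by auto
        qed
      qed
    qed
  qed
qed


theorem spectral:
  fixes A :: "'d::finite cmat"
  assumes h: "hermitian A"
  shows "\<exists>U (l::'d \<Rightarrow> real). unitary U \<and> A = U ** diagm (\<lambda>i. complex_of_real (l i)) ** adj U"
proof -
  obtain S where S: "finite S" "card S = CARD('d)"
    and ev: "\<forall>v\<in>S. vdot v v = 1 \<and> (\<exists>c::real. A *v v = complex_of_real c *s v)"
    and orth: "\<forall>v\<in>S. \<forall>w\<in>S. v \<noteq> w \<longrightarrow> vdot v w = 0"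
    using orth_eig_family[OF h, of "CARD('d)"] by auto
  obtain f where f: "bij_betw f (UNIV::'d set) S"
    using finite_same_card_bij[of "UNIV::'d set" S] S by auto
  have fS: "f j \<in> S" for j using f by (auto simp: bij_betw_def)
  have finj: "f j = f k \<Longrightarrow> j = k" for j k using f by (auto simp: bij_betw_def inj_on_def)
  define l where "l j = (SOME c::real. A *v f j = complex_of_real c *s f j)" for j
  have l: "A *v f j = complex_of_real (l j) *s f j" for j
  proof -
    have "\<exists>c::real. A *v f j = complex_of_real c *s f j" using ev fS[of j] by simp
    then show ?thesis unfolding l_def by (rule someI_ex)
  qed
  define U :: "'d cmat" where "U = (\<chi> i j. f j $ i)"
  have UU: "adj U ** U = mat 1"
  proof -
    have "(adj U ** U) $ j $ k = vdot (f j) (f k)" for j k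
      by (simp add: U_def mmult_nth vdot_def)
    moreover have "vdot (f j) (f k) = (if j = k then 1 else 0)" for j k
    proof (cases "j = k")
      case True then show ?thesis using ev fS by simp
    next
      case False then have "f j \<noteq> f k" using finj by blast
      then show ?thesis using orth fS False by simp
    qed
    ultimately show ?thesis by (simp add: vec_eq_iff mat_nth)
  qed
  then have UU': "U ** adj U = mat 1" using matrix_left_right_inverse by blast
  have AU: "A ** U = U ** diagm (\<lambda>i. complex_of_real (l i))"
  proof -
    have "(A ** U) $ i $ j = (A *v f j) $ i" for i j by (simp add: U_def mmult_nth mv_nth)
    moreover have "(U ** diagm (\<lambda>i. complex_of_real (l i))) $ i $ j = complex_of_real (l j) * f j $ i" for i j
      by (simp add: U_def mmult_nth if_distrib cong: if_cong)
    ultimately show ?thesis using l by (simp add: vec_eq_iff)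
  qed
  have "A = A ** (U ** adj U)" using UU' by simp
  also have "\<dots> = U ** diagm (\<lambda>i. complex_of_real (l i)) ** adj U" by (simp add: matrix_mul_assoc AU)
  finally show ?thesis using UU UU' unfolding unitary_def by blast
qed



lemma mmult_add_left: "(A + B) ** (C::'d::finite cmat) = A ** C + B ** C"
  by (simp add: vec_eq_iff mmult_nth distrib_right sum.distrib)
lemma mmult_add_right: "C ** (A + B) = C ** A + C ** (B::'d::finite cmat)"
  by (simp add: vec_eq_iff mmult_nth distrib_left sum.distrib)
lemma sum_delta_mult: "(\<Sum>k\<in>(UNIV::'d::finite set). (if i = k then a k else 0) * (b k :: complex)) = a i * b i"
proof -
  have "(\<Sum>k\<in>(UNIV::'d::finite set). (if i = k then a k else 0) * (b k :: complex)) = (\<Sum>k\<in>UNIV. if k = i then a k * b k else 0)"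
    by (rule sum.cong) auto
  then show ?thesis by simp
qed
lemma sum_delta_mult': "(\<Sum>k\<in>(UNIV::'d::finite set). (b k :: complex) * (if k = j then a k else 0)) = b j * a j"
proof -
  have "(\<Sum>k\<in>(UNIV::'d::finite set). (b k :: complex) * (if k = j then a k else 0)) = (\<Sum>k\<in>UNIV. if k = j then b k * a k else 0)"
    by (rule sum.cong) auto
  then show ?thesis by simp
qed
lemma diagm_mmult_nth: "(diagm f ** B) $ i $ j = f i * B $ i $ j"
  by (simp add: mmult_nth sum_delta_mult)
lemma mmult_diagm_nth: "(B ** diagm f) $ i $ j = B $ i $ j * f j"
  by (simp add: mmult_nth sum_delta_mult')
lemma diagm_mv_nth: "(diagm f *v w) $ i = f i * w $ i"
  by (simp add: mv_nth sum_delta_mult)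

lemma sum_mmult_left: "(\<Sum>x\<in>S. f x) ** (B::'d::finite cmat) = (\<Sum>x\<in>S. f x ** B)"
  by (induct S rule: infinite_finite_induct) (auto simp: mmult_add_left)
lemma sum_mmult_right: "(B::'d::finite cmat) ** (\<Sum>x\<in>S. f x) = (\<Sum>x\<in>S. B ** f x)"
  by (induct S rule: infinite_finite_induct) (auto simp: matrix_add_ldistrib)
lemma trace_zero[simp]: "trace (0::'d::finite cmat) = 0" by (simp add: trace_nth)
lemma trace_sum: "trace (\<Sum>x\<in>S. f x) = (\<Sum>x\<in>S. trace (f x :: 'd::finite cmat))"
  by (induct S rule: infinite_finite_induct) (auto simp: trace_add trace_zero)
lemma mmult_diff_left: "(A - B) ** (C::'d::finite cmat) = A ** C - B ** C"
  by (simp add: vec_eq_iff mmult_nth left_diff_distrib sum_subtractf)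
lemma mmult_diff_right: "C ** (A - B) = C ** A - C ** (B::'d::finite cmat)"
  by (simp add: vec_eq_iff mmult_nth right_diff_distrib sum_subtractf)
lemma cscale_mmult_left: "cscale c A ** B = cscale c (A ** (B::'d::finite cmat))"
  by (simp add: vec_eq_iff mmult_nth sum_distrib_left mult.assoc)
lemma cscale_mmult_right: "A ** cscale c B = cscale c (A ** (B::'d::finite cmat))"
  by (simp add: vec_eq_iff mmult_nth sum_distrib_left mult.left_commute)
lemma trace_cscale: "trace (cscale c A) = c * trace (A::'d::finite cmat)"
  by (simp add: trace_nth sum_distrib_left)
lemma cscale_add: "cscale c (A + B) = cscale c A + cscale c (B::'d::finite cmat)"
  by (simp add: vec_eq_iff distrib_left)
lemma cscale_diff: "cscale c (A - B) = cscale c A - cscale c (B::'d::finite cmat)"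
  by (simp add: vec_eq_iff right_diff_distrib)
lemma cscale_sum: "cscale c (\<Sum>x\<in>S. f x) = (\<Sum>x\<in>S. cscale c (f x :: 'd::finite cmat))"
  by (induct S rule: infinite_finite_induct) (auto simp: cscale_add vec_eq_iff)
lemma cscale_cscale: "cscale a (cscale b A) = cscale (a * b) (A::'d::finite cmat)"
  by (simp add: vec_eq_iff mult.assoc)
lemma cscale_1[simp]: "cscale 1 A = (A::'d::finite cmat)"
  by (simp add: vec_eq_iff)
lemma cscale_0[simp]: "cscale 0 A = (0::'d::finite cmat)"
  by (simp add: vec_eq_iff)
lemma cscale_zero[simp]: "cscale c 0 = (0::'d::finite cmat)"
  by (simp add: vec_eq_iff)
lemma cscale_add_left: "cscale (a + b) A = cscale a A + cscale b (A::'d::finite cmat)"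
  by (simp add: vec_eq_iff distrib_right)
lemma cscale_sum_left: "cscale (\<Sum>x\<in>S. f x) A = (\<Sum>x\<in>S. cscale (f x) (A::'d::finite cmat))"
  by (induct S rule: infinite_finite_induct) (auto simp: cscale_add_left vec_eq_iff)
lemma mmult_zero_left[simp]: "(0::'d::finite cmat) ** A = 0" by (simp add: vec_eq_iff mmult_nth)
lemma mmult_zero_right[simp]: "A ** (0::'d::finite cmat) = 0" by (simp add: vec_eq_iff mmult_nth)

lemma trace_mmult_comm: "trace (A ** B) = trace (B ** (A::'d::finite cmat))"
  by (rule trace_mul_sym)

lemma diagm_mult: "diagm f ** diagm g = diagm (\<lambda>i. f i * g i)"
  by (simp add: vec_eq_iff diagm_mmult_nth)

lemma trace_diagm: "trace (diagm f) = (\<Sum>i\<in>UNIV. f i)" by (simp add: trace_nth)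

lemma unitary_adj_mult: "unitary V \<Longrightarrow> adj V ** V = mat 1" by (simp add: unitary_def)
lemma unitary_mult_adj: "unitary V \<Longrightarrow> V ** adj V = mat 1" by (simp add: unitary_def)

lemma udiag_mult:
  assumes "unitary V"
  shows "(V ** diagm f ** adj V) ** (V ** diagm g ** adj V) = V ** diagm (\<lambda>i. f i * g i) ** adj V"
proof -
  have "(V ** diagm f ** adj V) ** (V ** diagm g ** adj V) = V ** diagm f ** (adj V ** V) ** diagm g ** adj V"
    by (simp add: matrix_mul_assoc)
  also have "\<dots> = V ** diagm (\<lambda>i. f i * g i) ** adj V"
    using assms by (simp add: unitary_adj_mult diagm_mult flip: matrix_mul_assoc)
  finally show ?thesis .
qed

lemma udiag_trace:
  assumes "unitary V"
  shows "trace (V ** diagm f ** adj V) = (\<Sum>i\<in>UNIV. f i)"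
proof -
  have "trace (V ** diagm f ** adj V) = trace (adj V ** (V ** diagm f))"
    by (rule trace_mmult_comm)
  also have "\<dots> = trace (diagm f)" using assms by (simp add: matrix_mul_assoc unitary_adj_mult)
  finally show ?thesis by (simp add: trace_diagm)
qed

lemma udiag_adj: "adj (V ** diagm (\<lambda>i. complex_of_real (f i)) ** adj V) = V ** diagm (\<lambda>i. complex_of_real (f i)) ** adj V"
  by (simp add: adj_mult adj_diagm matrix_mul_assoc)

lemma mv_mmult: "(A ** B) *v x = A *v (B *v (x::complex^'d::finite))"
  by (simp add: matrix_vector_mul_assoc)

lemma vdot_diagm: "vdot w (diagm (\<lambda>i. complex_of_real (f i)) *v w) = complex_of_real (\<Sum>i\<in>UNIV. f i * cmod (w $ i) ^ 2)"
proof -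
  have "vdot w (diagm (\<lambda>i. complex_of_real (f i)) *v w) = (\<Sum>i\<in>UNIV. complex_of_real (f i * cmod (w $ i) ^ 2))"
    unfolding vdot_def diagm_mv_nth
    by (rule sum.cong) (auto simp: complex_norm_square mult.commute mult.left_commute simp del: of_real_power)
  then show ?thesis by simp
qed

lemma udiag_quad:
  "vdot v ((V ** diagm (\<lambda>i. complex_of_real (f i)) ** adj V) *v v)
     = complex_of_real (\<Sum>i\<in>UNIV. f i * cmod ((adj V *v v) $ i) ^ 2)"
proof -
  have "vdot v ((V ** diagm (\<lambda>i. complex_of_real (f i)) ** adj V) *v v)
     = vdot v (V *v (diagm (\<lambda>i. complex_of_real (f i)) *v (adj V *v v)))"
    by (simp add: mv_mmult)
  also have "\<dots> = vdot (adj V *v v) (diagm (\<lambda>i. complex_of_real (f i)) *v (adj V *v v))"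
    by (simp add: vdot_adj)
  finally show ?thesis by (simp add: vdot_diagm)
qed

lemma psd_vdot: "psd A \<longleftrightarrow> hermitian A \<and> (\<forall>v. 0 \<le> Re (vdot v (A *v v)))"
  by (simp add: psd_def vdot_def)

lemma udiag_psd:
  assumes "\<And>i. f i \<ge> 0"
  shows "psd (V ** diagm (\<lambda>i. complex_of_real (f i)) ** adj V)"
  unfolding psd_vdot hermitian_def
  using assms by (simp add: udiag_adj udiag_quad sum_nonneg)

section \<open>Functional calculus\<close>

lemma mfun_decomp:
  fixes A :: "'d::finite cmat"
  assumes "hermitian A"
  obtains V \<mu> where "unitary V" "A = V ** diagm (\<lambda>i. complex_of_real (\<mu> i)) ** adj V"
    "\<And>f. mfun f A = V ** diagm (\<lambda>i. complex_of_real (f (\<mu> i))) ** adj V"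
proof -
  let ?P = "\<lambda>p::'d cmat \<times> ('d \<Rightarrow> real). unitary (fst p) \<and>
      A = fst p ** diagm (\<lambda>i. complex_of_real (snd p i)) ** adj (fst p)"
  have "\<exists>p. ?P p" using spectral[OF assms] by auto
  then have "?P (SOME p. ?P p)" by (rule someI_ex)
  then show thesis using that[of "fst (SOME p. ?P p)" "snd (SOME p. ?P p)"]
    unfolding mfun_def Let_def by auto
qed

lemma udiag_eigs_nonneg:
  fixes A :: "'d::finite cmat"
  assumes U: "unitary V" and A: "A = V ** diagm (\<lambda>i. complex_of_real (\<mu> i)) ** adj V" and p: "psd A"
  shows "\<mu> i \<ge> 0"
proof -
  define w :: "complex^'d" where "w = (\<chi> k. if k = i then 1 else 0)"
  have aw: "adj V *v (V *v w) = w" using U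
    by (simp add: unitary_adj_mult flip: mv_mmult)
  have "vdot (V *v w) (A *v (V *v w)) = complex_of_real (\<Sum>k\<in>UNIV. \<mu> k * cmod (w $ k) ^ 2)"
    unfolding A udiag_quad aw ..
  also have "\<dots> = complex_of_real (\<mu> i)"
  proof -
    have "(\<Sum>k\<in>UNIV. \<mu> k * cmod (w $ k) ^ 2) = (\<Sum>k\<in>UNIV. if k = i then \<mu> k else 0)"
      by (rule sum.cong) (auto simp: w_def)
    then show ?thesis by simp
  qed
  finally show ?thesis using p unfolding psd_vdot by (metis Re_complex_of_real)
qed

lemma cscale_udiag: "cscale c (V ** diagm f ** adj V) = V ** diagm (\<lambda>i. c * f i) ** adj (V::'d::finite cmat)"
proof -
  have "cscale c (diagm f) = diagm (\<lambda>i. c * f i)" by (simp add: vec_eq_iff)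
  moreover have "cscale c (V ** diagm f ** adj V) = cscale c (V ** diagm f) ** adj V" by (simp add: cscale_mmult_left)
  moreover have "cscale c (V ** diagm f) = V ** cscale c (diagm f)" by (simp add: cscale_mmult_right)
  ultimately show ?thesis by simp
qed

lemma gibbs_decomp:
  fixes H :: "'d::finite cmat"
  assumes h: "hermitian H"
  shows "\<exists>V p. unitary V \<and> (\<forall>i. p i > 0) \<and> gibbs \<beta> H = V ** diagm (\<lambda>i. complex_of_real (p i)) ** adj V"
proof -
  obtain V lam where V: "unitary V"
    and mf: "\<And>f. mfun f H = V ** diagm (\<lambda>i. complex_of_real (f (lam i))) ** adj V"
    using mfun_decomp[OF h] by metis
  define e where "e i = exp (- \<beta> * lam i)" for i
  define Z where "Z = (\<Sum>i\<in>UNIV. e i)"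
  have e: "e i > 0" for i by (simp add: e_def)
  have Z: "Z > 0" unfolding Z_def using e by (simp add: sum_pos)
  have G: "mfun (\<lambda>x. exp (- \<beta> * x)) H = V ** diagm (\<lambda>i. complex_of_real (e i)) ** adj V"
    by (simp add: mf e_def)
  have trG: "trace (mfun (\<lambda>x. exp (- \<beta> * x)) H) = complex_of_real Z"
    unfolding G udiag_trace[OF V] Z_def by simp
  have "gibbs \<beta> H = V ** diagm (\<lambda>i. complex_of_real (e i / Z)) ** adj V"
    unfolding gibbs_def trG unfolding G cscale_udiag by (simp add: divide_simps)
  moreover have "\<forall>i. e i / Z > 0" using e Z by simp
  ultimately show ?thesis using V by (intro exI[of _ V] exI[of _ "\<lambda>i. e i / Z"]) simp
qed

lemma gibbs_psd: "hermitian H \<Longrightarrow> psd (gibbs \<beta> (H::'d::finite cmat))"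
  using gibbs_decomp[of H \<beta>] udiag_psd by (metis less_imp_le)

lemma psd_hermitian: "psd A \<Longrightarrow> hermitian A" by (simp add: psd_def)

section \<open>Channels\<close>

lemma kraus_dual_one: "is_channel I K \<Longrightarrow> kraus_dual I K (mat 1) = mat 1"
  by (simp add: kraus_dual_def is_channel_def)

lemma trace_kraus_chan:
  assumes "is_channel I K"
  shows "trace (kraus_chan I K X) = trace X"
proof -
  have "trace (kraus_chan I K X) = (\<Sum>i\<in>I. trace (adj (K i) ** K i ** X))"
    unfolding kraus_chan_def trace_sum
    by (intro sum.cong refl) (metis trace_mmult_comm matrix_mul_assoc)
  also have "\<dots> = trace ((\<Sum>i\<in>I. adj (K i) ** K i) ** X)"
    by (simp add: trace_sum sum_mmult_left)
  finally show ?thesis using assms by (simp add: is_channel_def)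
qed

lemma trace_R_dual: "trace (R ** kraus_dual I K B) = trace (kraus_chan I K R ** B)"
proof -
  have "trace (R ** kraus_dual I K B) = (\<Sum>i\<in>I. trace (R ** (adj (K i) ** B ** K i)))"
    by (simp add: kraus_dual_def sum_mmult_right trace_sum)
  also have "\<dots> = (\<Sum>i\<in>I. trace (K i ** R ** adj (K i) ** B))"
    by (intro sum.cong refl) (metis trace_mmult_comm matrix_mul_assoc)
  also have "\<dots> = trace (kraus_chan I K R ** B)"
    by (simp add: kraus_chan_def sum_mmult_left trace_sum)
  finally show ?thesis .
qed

lemma trace_basis: "trace (X ** (\<chi> a b. if a = j \<and> b = i then 1 else 0)) = X $ i $ (j::'d::finite)"
proof -
  have "(X ** (\<chi> a b. if a = j \<and> b = i then 1 else 0)) $ a $ a = (if a = i then X $ a $ j else 0)" for a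
    by (simp add: mmult_nth if_distrib cong: if_cong)
  then show ?thesis by (simp add: trace_nth)
qed

lemma trace_ext: "(\<And>B. trace (X ** B) = trace (Y ** B)) \<Longrightarrow> X = (Y::'d::finite cmat)"
  using trace_basis by (metis vec_eq_iff)

lemma powr_prod_self: "(x::real) \<ge> 0 \<Longrightarrow> x powr a * x powr (1 - a) = x"
  by (cases "x = 0") (auto simp: powr_add[symmetric])

lemma inner_s_one:
  assumes p: "psd R"
  shows "inner_s s R (mat 1) Y = trace (R ** Y)"
proof -
  obtain W \<mu> where W: "unitary W" and R: "R = W ** diagm (\<lambda>i. complex_of_real (\<mu> i)) ** adj W"
    and mf: "\<And>f. mfun f R = W ** diagm (\<lambda>i. complex_of_real (f (\<mu> i))) ** adj W"
    using mfun_decomp[OF psd_hermitian[OF p]] by metis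
  have mu: "\<mu> i \<ge> 0" for i using udiag_eigs_nonneg[OF W R p] .
  have "mpowr R s ** mpowr R (1 - s) = W ** diagm (\<lambda>i. complex_of_real (\<mu> i powr s) * complex_of_real (\<mu> i powr (1 - s))) ** adj W"
    unfolding mpowr_def mf udiag_mult[OF W] ..
  also have "\<dots> = R" unfolding R using mu by (simp add: powr_prod_self flip: of_real_mult)
  finally have PP: "mpowr R s ** mpowr R (1 - s) = R" .
  have "inner_s s R (mat 1) Y = trace ((mpowr R (1 - s) ** Y) ** mpowr R s)"
    by (simp add: inner_s_def matrix_mul_assoc)
  also have "\<dots> = trace (mpowr R s ** (mpowr R (1 - s) ** Y))" by (rule trace_mmult_comm)
  also have "\<dots> = trace (R ** Y)" by (simp add: matrix_mul_assoc PP)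
  finally show ?thesis .
qed

lemma db_stationary:
  assumes ch: "is_channel I K" and db: "detailed_balance s R I K" and p: "psd R"
  shows "kraus_chan I K R = R"
proof (rule trace_ext)
  fix B
  have "inner_s s R (mat 1) (kraus_dual I K B) = inner_s s R (kraus_dual I K (mat 1)) B"
    using db unfolding detailed_balance_def by blast
  then have "trace (R ** kraus_dual I K B) = trace (R ** B)"
    using kraus_dual_one[OF ch] by (simp add: inner_s_one[OF p])
  then show "trace (kraus_chan I K R ** B) = trace (R ** B)" by (simp add: trace_R_dual)
qed



definition lin :: "('d::finite cmat \<Rightarrow> 'd cmat) \<Rightarrow> bool" where
  "lin \<Phi> \<longleftrightarrow> (\<forall>X Y. \<Phi> (X + Y) = \<Phi> X + \<Phi> Y) \<and> (\<forall>c X. \<Phi> (cscale c X) = cscale c (\<Phi> X))"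

lemma lin_add: "lin \<Phi> \<Longrightarrow> \<Phi> (X + Y) = \<Phi> X + \<Phi> Y" by (simp add: lin_def)
lemma lin_cscale: "lin \<Phi> \<Longrightarrow> \<Phi> (cscale c X) = cscale c (\<Phi> X)" by (simp add: lin_def)
lemma lin_zero: "lin \<Phi> \<Longrightarrow> \<Phi> 0 = 0"
  using lin_cscale[of \<Phi> 0 0] by simp
lemma lin_sum: "lin \<Phi> \<Longrightarrow> \<Phi> (\<Sum>x\<in>S. f x) = (\<Sum>x\<in>S. \<Phi> (f x))"
  by (induct S rule: infinite_finite_induct) (auto simp: lin_zero lin_add)
lemma cscale_m1: "X - Y = X + cscale (-1) (Y::'d::finite cmat)"
  by (simp add: vec_eq_iff)
lemma lin_diff: "lin \<Phi> \<Longrightarrow> \<Phi> (X - Y) = \<Phi> X - \<Phi> Y"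
  by (simp add: cscale_m1 lin_add lin_cscale)
lemma lin_comp: "lin \<Phi> \<Longrightarrow> lin \<Psi> \<Longrightarrow> lin (\<Phi> \<circ> \<Psi>)"
  by (simp add: lin_def)
lemma lin_id: "lin (\<lambda>X. X)" by (simp add: lin_def)
lemma lin_id': "lin id" by (simp add: lin_def)
lemma lin_sandwich: "lin (\<lambda>X. A ** X ** (B::'d::finite cmat))"
  by (simp add: lin_def matrix_add_ldistrib mmult_add_left cscale_mmult_left cscale_mmult_right)
lemma sandwich_add: "A ** (X + Y) ** B = A ** X ** B + A ** Y ** (B::'d::finite cmat)"
  by (simp add: matrix_add_ldistrib mmult_add_left)
lemma sandwich_cscale: "A ** cscale c X ** B = cscale c (A ** X ** (B::'d::finite cmat))"
  by (simp add: cscale_mmult_left cscale_mmult_right)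
lemma lin_sum_fun: "(\<And>x. lin (F x)) \<Longrightarrow> lin (\<lambda>X. \<Sum>x\<in>S. F x X)"
  by (simp add: lin_def sum.distrib cscale_sum)
lemma lin_cscale_fun: "lin \<Phi> \<Longrightarrow> lin (\<lambda>X. cscale c (\<Phi> X))"
  by (simp add: lin_def cscale_add cscale_cscale mult.commute)
lemma lin_kraus: "lin (kraus_chan I K)"
  unfolding kraus_chan_def by (intro lin_sum_fun lin_sandwich)
lemma lin_pow: "lin \<Phi> \<Longrightarrow> lin (\<Phi> ^^ n)"
  by (induct n) (simp_all add: lin_id' lin_comp)

lemma lin_traj: "lin (traj I K U Om us)"
proof (induct us)
  case Nil
  have "traj I K U Om [] = id" by (rule ext) simp
  then show ?case by (simp add: lin_id' lin_id)
next
  case (Cons u us)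
  have "traj I K U Om (u # us) = traj I K U Om us \<circ> (kraus_chan U Om \<circ> (kraus_chan I K \<circ> (\<lambda>X. Om u ** X ** adj (Om u))))"
    by (rule ext) simp
  show ?case unfolding lin_def
    by (simp add: lin_add[OF Cons] lin_cscale[OF Cons] lin_add[OF lin_kraus] lin_cscale[OF lin_kraus]
        sandwich_add sandwich_cscale)
qed

definition Phi :: "'i set \<Rightarrow> ('i \<Rightarrow> 'd::finite cmat) \<Rightarrow> real set \<Rightarrow> (real \<Rightarrow> 'd cmat) \<Rightarrow> (real \<Rightarrow> real) \<Rightarrow> 'd cmat \<Rightarrow> 'd cmat" where
  "Phi I K U Om h X = kraus_chan U Om (kraus_chan I K
      (\<Sum>u\<in>U. cscale (complex_of_real (h u)) (Om u ** X ** adj (Om u))))"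

fun Fh :: "'i set \<Rightarrow> ('i \<Rightarrow> 'd::finite cmat) \<Rightarrow> real set \<Rightarrow> (real \<Rightarrow> 'd cmat) \<Rightarrow> (nat \<Rightarrow> real \<Rightarrow> real) \<Rightarrow> nat \<Rightarrow> 'd cmat \<Rightarrow> 'd cmat" where
  "Fh I K U Om h 0 X = X"
| "Fh I K U Om h (Suc n) X = Fh I K U Om (\<lambda>i. h (Suc i)) n (Phi I K U Om (h 0) X)"

lemma lin_Phi: "lin (Phi I K U Om h)"
proof -
  have "Phi I K U Om h = kraus_chan U Om \<circ> (kraus_chan I K \<circ> (\<lambda>X. \<Sum>u\<in>U. cscale (complex_of_real (h u)) (Om u ** X ** adj (Om u))))"
    by (rule ext) (simp add: Phi_def)
  moreover have "lin (\<lambda>X. \<Sum>u\<in>U. cscale (complex_of_real (h u)) (Om u ** X ** adj (Om u)))"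
    by (rule lin_sum_fun, rule lin_cscale_fun, rule lin_sandwich)
  ultimately show ?thesis using lin_comp[OF lin_kraus[of U Om] lin_comp[OF lin_kraus[of I K]]] by simp
qed

lemma lin_Fh: "lin (Fh I K U Om h n)"
proof (induct n arbitrary: h)
  case 0
  have "Fh I K U Om h 0 = id" by (rule ext) simp
  then show ?case by (simp add: lin_id' lin_id)
next
  case (Suc n)
  have "Fh I K U Om h (Suc n) = Fh I K U Om (\<lambda>i. h (Suc i)) n \<circ> Phi I K U Om (h 0)"
    by (rule ext) simp
  show ?case unfolding lin_def
    by (simp add: lin_add[OF Suc] lin_cscale[OF Suc] lin_add[OF lin_Phi] lin_cscale[OF lin_Phi])
qed

lemma Phi_expand: "Phi I K U Om h X =
   (\<Sum>u\<in>U. cscale (complex_of_real (h u)) (kraus_chan U Om (kraus_chan I K (Om u ** X ** adj (Om u)))))"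
proof -
  have l: "lin (kraus_chan U Om \<circ> kraus_chan I K)" by (rule lin_comp[OF lin_kraus lin_kraus])
  have e1: "kraus_chan U Om (kraus_chan I K (\<Sum>u\<in>U. F u)) = (\<Sum>u\<in>U. kraus_chan U Om (kraus_chan I K (F u)))" for F
    using lin_sum[OF l, of F U] by simp
  have e2: "kraus_chan U Om (kraus_chan I K (cscale c Y)) = cscale c (kraus_chan U Om (kraus_chan I K Y))" for c Y
    using lin_cscale[OF l, of c Y] by simp
  show ?thesis by (simp only: Phi_def e1 e2)
qed

lemma traj_sum:
  assumes U: "finite U"
  shows "(\<Sum>us\<in>{us. set us \<subseteq> U \<and> length us = n}.
            complex_of_real (\<Prod>i<n. h i (us!i)) * trace (traj I K U Om us X))
         = trace (Fh I K U Om h n X)"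
proof (induct n arbitrary: h X)
  case 0
  have "{us. set us \<subseteq> U \<and> length us = 0} = {[]}" by auto
  then show ?case by simp
next
  case (Suc n)
  let ?L = "{us. set us \<subseteq> U \<and> length us = n}"
  let ?Y = "\<lambda>u. kraus_chan U Om (kraus_chan I K (Om u ** X ** adj (Om u)))"
  have inj: "inj_on (\<lambda>(xs, u). u # xs) (?L \<times> U)" by (auto simp: inj_on_def)
  have "(\<Sum>us\<in>{us. set us \<subseteq> U \<and> length us = Suc n}.
            complex_of_real (\<Prod>i<Suc n. h i (us!i)) * trace (traj I K U Om us X))
      = (\<Sum>(xs, u)\<in>?L \<times> U. complex_of_real (\<Prod>i<Suc n. h i ((u#xs)!i)) * trace (traj I K U Om (u#xs) X))"
    unfolding lists_length_Suc_eq sum.reindex[OF inj] by (simp add: case_prod_beta)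
  also have "\<dots> = (\<Sum>xs\<in>?L. \<Sum>u\<in>U. complex_of_real (h 0 u) *
        (complex_of_real (\<Prod>i<n. h (Suc i) (xs!i)) * trace (traj I K U Om xs (?Y u))))"
    unfolding sum.cartesian_product[symmetric]
    by (intro sum.cong refl) (simp add: prod.lessThan_Suc_shift del: prod.lessThan_Suc)
  also have "\<dots> = (\<Sum>u\<in>U. complex_of_real (h 0 u) * (\<Sum>xs\<in>?L.
        complex_of_real (\<Prod>i<n. h (Suc i) (xs!i)) * trace (traj I K U Om xs (?Y u))))"
    by (subst sum.swap) (simp add: sum_distrib_left)
  also have "\<dots> = (\<Sum>u\<in>U. complex_of_real (h 0 u) * trace (Fh I K U Om (\<lambda>i. h (Suc i)) n (?Y u)))"
    using Suc[of "\<lambda>i. h (Suc i)"] by simp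
  also have "\<dots> = trace (Fh I K U Om (\<lambda>i. h (Suc i)) n (\<Sum>u\<in>U. cscale (complex_of_real (h 0 u)) (?Y u)))"
    by (simp add: lin_sum[OF lin_Fh] lin_cscale[OF lin_Fh] trace_sum trace_cscale)
  also have "\<dots> = trace (Fh I K U Om h (Suc n) X)"
    by (simp add: Phi_expand)
  finally show ?case .
qed



lemma Fh_add: "Fh I K U Om h (a + b) X = Fh I K U Om (\<lambda>i. h (a + i)) b (Fh I K U Om h a X)"
proof (induct a arbitrary: h X)
  case 0 then show ?case by simp
next
  case (Suc a)
  have "Fh I K U Om h (Suc a + b) X = Fh I K U Om (\<lambda>i. h (Suc i)) (a + b) (Phi I K U Om (h 0) X)" by simp
  also have "\<dots> = Fh I K U Om (\<lambda>i. h (Suc (a + i))) b (Fh I K U Om (\<lambda>i. h (Suc i)) a (Phi I K U Om (h 0) X))"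
    using Suc[of "\<lambda>i. h (Suc i)"] by simp
  finally show ?case by simp
qed

lemma Phi_one: "Phi I K U Om (\<lambda>_. 1) X = chan_E I K U Om X"
  by (simp add: Phi_def chan_E_def kraus_chan_def)

lemma Phi_hat: "Phi I K U Om (\<lambda>u. u - meas_mean R U Om) X = chan_E_hat R I K U Om X"
  by (simp add: Phi_def chan_E_hat_def meas_hat_def)

lemma Fh_ones: "(\<And>i. i < n \<Longrightarrow> h i = (\<lambda>_. 1)) \<Longrightarrow> Fh I K U Om h n X = (chan_E I K U Om ^^ n) X"
proof (induct n arbitrary: h X)
  case 0 then show ?case by simp
next
  case (Suc n)
  have h0: "h 0 = (\<lambda>_. 1)" using Suc(2) by simp
  have "Fh I K U Om h (Suc n) X = Fh I K U Om (\<lambda>i. h (Suc i)) n (chan_E I K U Om X)"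
    by (simp add: h0 Phi_one)
  also have "\<dots> = (chan_E I K U Om ^^ n) (chan_E I K U Om X)"
    using Suc(1)[of "\<lambda>i. h (Suc i)"] Suc(2) by simp
  finally show ?case by (simp add: funpow_swap1)
qed


definition hh :: "real \<Rightarrow> nat \<Rightarrow> nat \<Rightarrow> nat \<Rightarrow> real \<Rightarrow> real" where
  "hh m t s i u = (if i = t then u - m else 1) * (if i = s then u - m else 1)"

lemma hh_sym: "hh m t s = hh m s t"
  by (simp add: hh_def fun_eq_iff mult.commute)

context
  fixes I :: "'i set" and K :: "'i \<Rightarrow> 'd::finite cmat" and U :: "real set" and Om :: "real \<Rightarrow> 'd cmat"
    and R :: "'d cmat"
  assumes chN: "is_channel I K" and chM: "is_channel U Om"
    and statN: "kraus_chan I K R = R" and statM: "kraus_chan U Om R = R"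
begin

lemma trace_E: "trace (chan_E I K U Om X) = trace X"
  by (simp add: chan_E_def trace_kraus_chan[OF chN] trace_kraus_chan[OF chM])

lemma trace_Epow: "trace ((chan_E I K U Om ^^ n) X) = trace X"
  by (induct n) (simp_all add: trace_E)

lemma E_R: "chan_E I K U Om R = R"
  by (simp add: chan_E_def statN statM)

lemma Epow_R: "(chan_E I K U Om ^^ n) R = R"
  by (induct n) (simp_all add: E_R)

lemma trace_Phi: "trace (Phi I K U Om h X) = (\<Sum>u\<in>U. complex_of_real (h u) * trace (Om u ** X ** adj (Om u)))"
  by (simp add: Phi_def trace_kraus_chan[OF chN] trace_kraus_chan[OF chM] trace_sum trace_cscale)

lemma trace_Fh_ones: "(\<And>i. i < n \<Longrightarrow> h i = (\<lambda>_. 1)) \<Longrightarrow> trace (Fh I K U Om h n X) = trace X"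
  by (simp add: Fh_ones trace_Epow)

lemma Fh_prefix: "(\<And>i. i < a \<Longrightarrow> h i = (\<lambda>_. 1)) \<Longrightarrow> Fh I K U Om h (a + b) R = Fh I K U Om (\<lambda>i. h (a + i)) b R"
  by (simp add: Fh_add Fh_ones Epow_R)


lemma trace_Fh_cross:
  assumes ts: "t < s" "s < n"
  shows "trace (Fh I K U Om (hh (meas_mean R U Om) t s) n R)
       = trace (chan_E_hat R I K U Om ((chan_E I K U Om ^^ (s - t - 1)) (chan_E_hat R I K U Om R)))"
proof -
  define m where "m = s - t - 1"
  define r where "r = n - s - 1"
  define \<mu> where "\<mu> = meas_mean R U Om"
  let ?h = "hh \<mu> t s"
  let ?E = "chan_E I K U Om"
  let ?Eh = "chan_E_hat R I K U Om"
  have n: "n = t + (Suc (m + Suc r))" using ts by (simp add: m_def r_def)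
  have s: "s = t + Suc m" using ts by (simp add: m_def)
  have "Fh I K U Om ?h n R = Fh I K U Om (\<lambda>i. ?h (t + i)) (Suc (m + Suc r)) R"
    unfolding n by (rule Fh_prefix) (use ts in \<open>auto simp: hh_def fun_eq_iff\<close>)
  also have "\<dots> = Fh I K U Om (\<lambda>i. ?h (t + Suc i)) (m + Suc r) (Phi I K U Om (?h t) R)"
    by simp
  also have "?h t = (\<lambda>u. u - \<mu>)" using ts by (simp add: hh_def fun_eq_iff)
  also have "Phi I K U Om (\<lambda>u. u - \<mu>) R = ?Eh R" unfolding \<mu>_def by (rule Phi_hat)
  also have "Fh I K U Om (\<lambda>i. ?h (t + Suc i)) (m + Suc r) (?Eh R)
      = Fh I K U Om (\<lambda>i. ?h (t + Suc (m + i))) (Suc r) ((?E ^^ m) (?Eh R))"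
  proof -
    have "Fh I K U Om (\<lambda>i. ?h (t + Suc i)) (m + Suc r) (?Eh R)
       = Fh I K U Om (\<lambda>i. ?h (t + Suc (m + i))) (Suc r) (Fh I K U Om (\<lambda>i. ?h (t + Suc i)) m (?Eh R))"
      by (simp only: Fh_add)
    moreover have "Fh I K U Om (\<lambda>i. ?h (t + Suc i)) m (?Eh R) = (?E ^^ m) (?Eh R)"
      by (rule Fh_ones) (auto simp: hh_def fun_eq_iff s)
    ultimately show ?thesis by simp
  qed
  also have "\<dots> = Fh I K U Om (\<lambda>i. ?h (t + Suc (m + Suc i))) r (Phi I K U Om (?h s) ((?E ^^ m) (?Eh R)))"
    by (simp add: s)
  also have "?h s = (\<lambda>u. u - \<mu>)" using ts by (simp add: hh_def fun_eq_iff)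
  also have "Phi I K U Om (\<lambda>u. u - \<mu>) ((?E ^^ m) (?Eh R)) = ?Eh ((?E ^^ m) (?Eh R))" unfolding \<mu>_def by (rule Phi_hat)
  finally have "Fh I K U Om ?h n R = Fh I K U Om (\<lambda>i. ?h (t + Suc (m + Suc i))) r (?Eh ((?E ^^ m) (?Eh R)))" .
  then have "trace (Fh I K U Om ?h n R) = trace (?Eh ((?E ^^ m) (?Eh R)))"
    by (simp add: trace_Fh_ones s hh_def fun_eq_iff)
  then show ?thesis by (simp add: \<mu>_def m_def)
qed

lemma trace_Fh_diag:
  assumes "t < n"
  shows "trace (Fh I K U Om (hh (meas_mean R U Om) t t) n R)
       = (\<Sum>u\<in>U. complex_of_real ((u - meas_mean R U Om)^2) * trace (Om u ** R ** adj (Om u)))"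
proof -
  define r where "r = n - t - 1"
  define \<mu> where "\<mu> = meas_mean R U Om"
  let ?h = "hh \<mu> t t"
  have n: "n = t + Suc r" using assms by (simp add: r_def)
  have "Fh I K U Om ?h n R = Fh I K U Om (\<lambda>i. ?h (t + i)) (Suc r) R"
    unfolding n by (rule Fh_prefix) (auto simp: hh_def fun_eq_iff)
  also have "\<dots> = Fh I K U Om (\<lambda>i. ?h (t + Suc i)) r (Phi I K U Om (?h t) R)"
    by simp
  finally have "trace (Fh I K U Om ?h n R) = trace (Phi I K U Om (?h t) R)"
    by (simp add: trace_Fh_ones hh_def fun_eq_iff)
  also have "\<dots> = (\<Sum>u\<in>U. complex_of_real ((u - \<mu>)^2) * trace (Om u ** R ** adj (Om u)))"
    by (simp add: trace_Phi hh_def power2_eq_square)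
  finally show ?thesis by (simp add: \<mu>_def)
qed

end



lemma double_sum:
  fixes V :: real and g :: "nat \<Rightarrow> real"
  shows "(\<Sum>t<n. \<Sum>s<n. (if t = s then V else if t < s then g (s - t - 1) else g (t - s - 1)))
       = real n * V + 2 * (\<Sum>k<n. (real n - real (Suc k)) * g k)"
proof (induct n)
  case 0 then show ?case by simp
next
  case (Suc n)
  let ?c = "\<lambda>t s. (if t = s then V else if t < s then g (s - t - 1) else g (t - s - 1))"
  have a: "(\<Sum>t<n. ?c t n) = (\<Sum>k<n. g k)"
  proof -
    have "(\<Sum>t<n. ?c t n) = (\<Sum>t<n. g (n - Suc t))" by (intro sum.cong) auto
    then show ?thesis by (simp add: sum.nat_diff_reindex)
  qed
  have b: "(\<Sum>s<n. ?c n s) = (\<Sum>k<n. g k)"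
  proof -
    have "(\<Sum>s<n. ?c n s) = (\<Sum>s<n. g (n - Suc s))" by (intro sum.cong) auto
    then show ?thesis by (simp add: sum.nat_diff_reindex)
  qed
  have "(\<Sum>t<Suc n. \<Sum>s<Suc n. ?c t s) = (\<Sum>t<n. \<Sum>s<n. ?c t s) + (\<Sum>t<n. ?c t n) + (\<Sum>s<n. ?c n s) + V"
    by (simp add: sum.distrib)
  also have "\<dots> = real n * V + 2 * (\<Sum>k<n. (real n - real (Suc k)) * g k) + 2 * (\<Sum>k<n. g k) + V"
    using Suc a b by simp
  also have "\<dots> = real (Suc n) * V + 2 * (\<Sum>k<Suc n. (real (Suc n) - real (Suc k)) * g k)"
  proof -
    have "(\<Sum>k<n. (real (Suc n) - real (Suc k)) * g k) = (\<Sum>k<n. (real n - real (Suc k)) * g k) + (\<Sum>k<n. g k)"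
      by (simp add: sum.distrib[symmetric] algebra_simps)
    then show ?thesis by (simp add: algebra_simps)
  qed
  finally show ?case .
qed

lemma Re_ofreal_mult: "Re (complex_of_real a * z) = a * Re z" by simp

lemma prod_hh:
  assumes "t < n" "s < n"
  shows "(\<Prod>i<n. hh m t s i (us ! i)) = (us ! t - m) * (us ! s - m)"
proof -
  have "(\<Prod>i<n. hh m t s i (us ! i)) = (\<Prod>i<n. if i = t then us ! i - m else 1) * (\<Prod>i<n. if i = s then us ! i - m else 1)"
    unfolding hh_def by (rule prod.distrib)
  also have "\<dots> = (us ! t - m) * (us ! s - m)" using assms by (simp add: prod.delta)
  finally show ?thesis .
qed

lemma sq_as_double_sum:
  assumes "length us = n" "n > 0"
  shows "(sum_list us / real n - m)^2 = (1 / real n ^ 2) * (\<Sum>t<n. \<Sum>s<n. \<Prod>i<n. hh m t s i (us ! i))"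
proof -
  have sl: "sum_list us = (\<Sum>t<n. us ! t)" using assms(1) by (simp add: sum_list_sum_nth atLeast0LessThan)
  have "(\<Sum>t<n. us ! t - m) = sum_list us - real n * m" by (simp add: sl sum_subtractf)
  then have e: "sum_list us / real n - m = (1 / real n) * (\<Sum>t<n. us ! t - m)"
    using assms(2) by (simp add: field_simps)
  have "(\<Sum>t<n. \<Sum>s<n. \<Prod>i<n. hh m t s i (us ! i)) = (\<Sum>t<n. \<Sum>s<n. (us ! t - m) * (us ! s - m))"
    by (intro sum.cong refl) (simp add: prod_hh)
  also have "\<dots> = (\<Sum>t<n. us ! t - m)^2"
    by (simp add: power2_eq_square sum_product)
  finally show ?thesis unfolding e by (simp add: power_mult_distrib power_divide)
qed

lemma t_aut_expand:
  assumes "n > 0" "meas_var R U Om > 0"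
  shows "2 * meas_var R U Om * t_aut R I K U Om n * real n
       = real n * meas_var R U Om + 2 * (\<Sum>k<n. (real n - real (Suc k)) * corr R I K U Om k)"
proof -
  define V where "V = meas_var R U Om"
  have "t_aut R I K U Om n = 1/2 + (\<Sum>k<n. (1 - real (Suc k) / real n) * (corr R I K U Om k / V))"
    unfolding t_aut_def autocorr_def V_def by (simp add: sum.atLeast1_atMost_eq)
  then have "2 * V * t_aut R I K U Om n * real n
      = real n * V + 2 * (\<Sum>k<n. V * real n * ((1 - real (Suc k) / real n) * (corr R I K U Om k / V)))"
    by (simp add: algebra_simps sum_distrib_left)
  also have "(\<Sum>k<n. V * real n * ((1 - real (Suc k) / real n) * (corr R I K U Om k / V)))
      = (\<Sum>k<n. (real n - real (Suc k)) * corr R I K U Om k)"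
    using assms by (intro sum.cong refl) (simp add: V_def field_simps)
  finally show ?thesis by (simp add: V_def)
qed

context
  fixes I :: "'i set" and K :: "'i \<Rightarrow> 'd::finite cmat" and U :: "real set" and Om :: "real \<Rightarrow> 'd cmat"
    and R :: "'d cmat"
  assumes chN: "is_channel I K" and chM: "is_channel U Om"
    and statN: "kraus_chan I K R = R" and statM: "kraus_chan U Om R = R"
begin

lemma Re_trace_Fh:
  assumes "t < n" "s < n"
  shows "Re (trace (Fh I K U Om (hh (meas_mean R U Om) t s) n R))
     = (if t = s then meas_var R U Om else if t < s then corr R I K U Om (s - t - 1) else corr R I K U Om (t - s - 1))"
proof -
  consider "t = s" | "t < s" | "s < t" by linarith
  then show ?thesis
  proof cases
    case 1
    then show ?thesis using trace_Fh_diag[OF chN chM statN statM assms(1)]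
      by (simp add: meas_var_def Re_sum)
  next
    case 2
    then show ?thesis using trace_Fh_cross[OF chN chM statN statM 2 assms(2)]
      by (simp add: corr_def)
  next
    case 3
    then show ?thesis using trace_Fh_cross[OF chN chM statN statM 3 assms(1)]
      by (simp add: corr_def hh_sym[of _ t s])
  qed
qed

lemma second_moment:
  assumes n: "n > 0" and V: "meas_var R U Om > 0"
  shows "(\<Sum>us\<in>{us. set us \<subseteq> U \<and> length us = n}.
            (sum_list us / real n - meas_mean R U Om)^2 * Re (trace (traj I K U Om us R)))
        = 2 * meas_var R U Om * t_aut R I K U Om n / real n"
proof -
  define \<mu> where "\<mu> = meas_mean R U Om"
  define L where "L = {us. set us \<subseteq> U \<and> length us = n}"
  have finU: "finite U" using chM by (simp add: is_channel_def)
  have tr: "(\<Sum>us\<in>L. (\<Prod>i<n. hh \<mu> t s i (us!i)) * Re (trace (traj I K U Om us R)))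
        = Re (trace (Fh I K U Om (hh \<mu> t s) n R))" for t s
  proof -
    have "Re (\<Sum>us\<in>L. complex_of_real (\<Prod>i<n. hh \<mu> t s i (us!i)) * trace (traj I K U Om us R))
        = Re (trace (Fh I K U Om (hh \<mu> t s) n R))"
      unfolding L_def traj_sum[OF finU] ..
    then show ?thesis by (simp only: Re_sum Re_ofreal_mult)
  qed
  have "(\<Sum>us\<in>L. (sum_list us / real n - \<mu>)^2 * Re (trace (traj I K U Om us R)))
      = (\<Sum>us\<in>L. (1 / real n ^ 2) * (\<Sum>t<n. \<Sum>s<n. (\<Prod>i<n. hh \<mu> t s i (us ! i)) * Re (trace (traj I K U Om us R))))"
    by (intro sum.cong refl) (simp add: L_def sq_as_double_sum[OF _ n] sum_distrib_right)
  also have "\<dots> = (1 / real n ^ 2) * (\<Sum>t<n. \<Sum>s<n. \<Sum>us\<in>L. (\<Prod>i<n. hh \<mu> t s i (us ! i)) * Re (trace (traj I K U Om us R)))"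
  proof -
    have "(\<Sum>us\<in>L. \<Sum>t<n. \<Sum>s<n. (\<Prod>i<n. hh \<mu> t s i (us ! i)) * Re (trace (traj I K U Om us R)))
       = (\<Sum>t<n. \<Sum>s<n. \<Sum>us\<in>L. (\<Prod>i<n. hh \<mu> t s i (us ! i)) * Re (trace (traj I K U Om us R)))"
      by (subst sum.swap, rule sum.cong[OF refl], rule sum.swap)
    then show ?thesis by (simp add: sum_divide_distrib[symmetric])
  qed
  also have "\<dots> = (1 / real n ^ 2) * (\<Sum>t<n. \<Sum>s<n. (if t = s then meas_var R U Om else if t < s then corr R I K U Om (s - t - 1) else corr R I K U Om (t - s - 1)))"
    unfolding tr by (intro arg_cong[where f="\<lambda>x. _ * x"] sum.cong refl) (simp add: \<mu>_def Re_trace_Fh)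
  also have "\<dots> = (1 / real n ^ 2) * (2 * meas_var R U Om * t_aut R I K U Om n * real n)"
    by (simp add: double_sum t_aut_expand[OF n V])
  also have "\<dots> = 2 * meas_var R U Om * t_aut R I K U Om n / real n"
    using n by (simp add: power2_eq_square)
  finally show ?thesis by (simp add: L_def \<mu>_def)
qed

end



section \<open>Kraus forms\<close>

definition cpf :: "('d::finite cmat \<Rightarrow> 'd cmat) \<Rightarrow> 'd cmat list \<Rightarrow> bool" where
  "cpf \<Phi> As \<longleftrightarrow> (\<forall>X. \<Phi> X = (\<Sum>A\<leftarrow>As. A ** X ** adj A))"

lemma sum_list_mmult_left: "(\<Sum>x\<leftarrow>xs. f x) ** (B::'d::finite cmat) = (\<Sum>x\<leftarrow>xs. f x ** B)"
  by (induct xs) (auto simp: mmult_add_left)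
lemma sum_list_mmult_right: "(B::'d::finite cmat) ** (\<Sum>x\<leftarrow>xs. f x) = (\<Sum>x\<leftarrow>xs. B ** f x)"
  by (induct xs) (auto simp: matrix_add_ldistrib)
lemma trace_sum_list: "trace (\<Sum>x\<leftarrow>xs. f x) = (\<Sum>x\<leftarrow>xs. trace (f x :: 'd::finite cmat))"
  by (induct xs) (auto simp: trace_add)
lemma sum_list_concat_map: "(\<Sum>x\<leftarrow>concat (map g ys). f x) = (\<Sum>y\<leftarrow>ys. \<Sum>x\<leftarrow>g y. (f x :: 'a::comm_monoid_add))"
  by (induct ys) auto
lemma sum_list_add: "(\<Sum>x\<leftarrow>xs. f x + g x) = (\<Sum>x\<leftarrow>xs. f x) + (\<Sum>x\<leftarrow>xs. (g x :: 'a::comm_monoid_add))"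
  by (induct xs) (auto simp: algebra_simps)

lemma cpf_sandwich: "cpf (\<lambda>X. A ** X ** adj A) [A]"
  by (simp add: cpf_def)

lemma cpf_kraus:
  assumes "is_channel I K"
  shows "\<exists>As. cpf (kraus_chan I K) As"
proof -
  have "finite I" using assms by (simp add: is_channel_def)
  then obtain xs where xs: "set xs = I" "distinct xs" using finite_distinct_list by blast
  have "cpf (kraus_chan I K) (map K xs)"
    unfolding cpf_def kraus_chan_def using xs by (simp add: sum_list_distinct_conv_sum_set comp_def)
  then show ?thesis ..
qed

lemma cpf_comp:
  assumes "cpf \<Phi> As" "cpf \<Psi> Bs"
  shows "cpf (\<lambda>X. \<Phi> (\<Psi> X)) (concat (map (\<lambda>A. map (\<lambda>B. A ** B) Bs) As))"
  unfolding cpf_def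
proof
  fix X
  have "\<Phi> (\<Psi> X) = (\<Sum>A\<leftarrow>As. A ** (\<Sum>B\<leftarrow>Bs. B ** X ** adj B) ** adj A)"
    using assms by (simp add: cpf_def)
  also have "\<dots> = (\<Sum>A\<leftarrow>As. \<Sum>B\<leftarrow>Bs. (A ** B) ** X ** adj (A ** B))"
    by (simp add: sum_list_mmult_left sum_list_mmult_right adj_mult matrix_mul_assoc)
  also have "\<dots> = (\<Sum>C\<leftarrow>concat (map (\<lambda>A. map (\<lambda>B. A ** B) Bs) As). C ** X ** adj C)"
    by (simp add: sum_list_concat_map comp_def)
  finally show "\<Phi> (\<Psi> X) = (\<Sum>C\<leftarrow>concat (map (\<lambda>A. map (\<lambda>B. A ** B) Bs) As). C ** X ** adj C)" .
qed

lemma cpf_sum: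
  assumes S: "finite S" and c: "\<And>x. x \<in> S \<Longrightarrow> \<exists>As. cpf (F x) As"
  shows "\<exists>Bs. cpf (\<lambda>X. \<Sum>x\<in>S. F x X) Bs"
proof -
  obtain xs where xs: "set xs = S" "distinct xs" using finite_distinct_list[OF S] by blast
  obtain G where G: "\<And>x. x \<in> S \<Longrightarrow> cpf (F x) (G x)" using c by metis
  have "cpf (\<lambda>X. \<Sum>x\<in>S. F x X) (concat (map G xs))"
    unfolding cpf_def
  proof
    fix X
    have "(\<Sum>x\<in>S. F x X) = (\<Sum>x\<leftarrow>xs. F x X)" using xs by (simp add: sum_list_distinct_conv_sum_set)
    also have "\<dots> = (\<Sum>x\<leftarrow>xs. \<Sum>A\<leftarrow>G x. A ** X ** adj A)"
      using G xs(1) by (intro arg_cong[where f=sum_list] map_cong refl) (auto simp: cpf_def)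
    also have "\<dots> = (\<Sum>A\<leftarrow>concat (map G xs). A ** X ** adj A)" by (simp add: sum_list_concat_map)
    finally show "(\<Sum>x\<in>S. F x X) = (\<Sum>A\<leftarrow>concat (map G xs). A ** X ** adj A)" .
  qed
  then show ?thesis ..
qed

lemma cpf_traj:
  assumes "is_channel I K" "is_channel U Om"
  shows "\<exists>As. cpf (traj I K U Om us) As"
proof (induct us)
  case Nil
  have "cpf (traj I K U Om []) [mat 1]" by (simp add: cpf_def)
  then show ?case ..
next
  case (Cons u us)
  obtain As where As: "cpf (traj I K U Om us) As" using Cons by blast
  obtain Bs where Bs: "cpf (kraus_chan U Om) Bs" using cpf_kraus[OF assms(2)] by blast
  obtain Cs where Cs: "cpf (kraus_chan I K) Cs" using cpf_kraus[OF assms(1)] by blast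
  have "cpf (\<lambda>X. traj I K U Om us (kraus_chan U Om (kraus_chan I K (Om u ** X ** adj (Om u)))))
     (concat (map (\<lambda>A. map (\<lambda>B. A ** B) (concat (map (\<lambda>A. map (\<lambda>B. A ** B) (concat (map (\<lambda>A. map (\<lambda>B. A ** B) [Om u]) Cs))) Bs))) As))"
    by (intro cpf_comp[OF As] cpf_comp[OF Bs] cpf_comp[OF Cs] cpf_sandwich)
  then have "cpf (traj I K U Om (u # us)) (concat (map (\<lambda>A. map (\<lambda>B. A ** B) (concat (map (\<lambda>A. map (\<lambda>B. A ** B) (concat (map (\<lambda>A. map (\<lambda>B. A ** B) [Om u]) Cs))) Bs))) As))"
    by (simp add: cpf_def)
  then show ?case ..
qed

section \<open>Positivity\<close>

lemma Re_sum_list: "Re (\<Sum>x\<leftarrow>xs. f x) = (\<Sum>x\<leftarrow>xs. Re (f x))"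
  by (induct xs) auto

lemma trace_sandwich_nonneg:
  assumes p: "psd R"
  shows "Re (trace (A ** R ** adj A)) \<ge> 0"
proof -
  have d: "(A ** R ** adj A) $ i $ i = vdot (\<chi> k. cnj (A $ i $ k)) (R *v (\<chi> k. cnj (A $ i $ k)))" for i
    by (simp add: mmult_nth vdot_def mv_nth sum_distrib_left sum_distrib_right mult.assoc mult.left_commute)
       (rule sum.swap)
  have "Re (trace (A ** R ** adj A)) = (\<Sum>i\<in>UNIV. Re (vdot (\<chi> k. cnj (A $ i $ k)) (R *v (\<chi> k. cnj (A $ i $ k)))))"
    by (simp add: trace_nth d Re_sum)
  also have "\<dots> \<ge> 0" using p by (intro sum_nonneg) (simp add: psd_vdot)
  finally show ?thesis .
qed

lemma cpf_trace_nonneg: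
  assumes "cpf \<Phi> As" "psd R"
  shows "Re (trace (\<Phi> R)) \<ge> 0"
proof -
  have "Re (trace (\<Phi> R)) = (\<Sum>A\<leftarrow>As. Re (trace (A ** R ** adj A)))"
    using assms(1) by (simp add: cpf_def trace_sum_list Re_sum_list)
  also have "\<dots> \<ge> 0" using trace_sandwich_nonneg[OF assms(2)] by (intro sum_list_nonneg) auto
  finally show ?thesis .
qed



lemma vdot_cs: "cmod (vdot x y) \<le> norm x * norm y"
proof -
  have "cmod (vdot x y) \<le> (\<Sum>i\<in>UNIV. cmod (x $ i) * cmod (y $ i))"
    unfolding vdot_def by (rule order_trans[OF norm_sum]) (simp add: norm_mult)
  also have "\<dots> \<le> L2_set (\<lambda>i. cmod (x $ i)) UNIV * L2_set (\<lambda>i. cmod (y $ i)) UNIV"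
    using L2_set_mult_ineq[of "\<lambda>i. cmod (x $ i)" "\<lambda>i. cmod (y $ i)" UNIV] by simp
  finally show ?thesis by (simp add: norm_vec_def)
qed

lemma list_cs:
  fixes a b :: "'x \<Rightarrow> real"
  shows "(\<Sum>x\<leftarrow>xs. \<bar>a x\<bar> * \<bar>b x\<bar>) \<le> sqrt (\<Sum>x\<leftarrow>xs. (a x)^2) * sqrt (\<Sum>x\<leftarrow>xs. (b x)^2)"
proof -
  have e: "(\<Sum>x\<leftarrow>xs. f x) = (\<Sum>i<length xs. f (xs!i))" for f :: "_ \<Rightarrow> real"
    by (simp add: sum_list_sum_nth atLeast0LessThan)
  have "(\<Sum>i<length xs. \<bar>a (xs!i)\<bar> * \<bar>b (xs!i)\<bar>) \<le> L2_set (\<lambda>i. a (xs!i)) {..<length xs} * L2_set (\<lambda>i. b (xs!i)) {..<length xs}"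
    by (rule L2_set_mult_ineq)
  then show ?thesis by (simp add: e L2_set_def)
qed

lemma norm_sum_list_le: "cmod (\<Sum>x\<leftarrow>xs. f x) \<le> (\<Sum>x\<leftarrow>xs. cmod (f x))"
  by (induct xs) (auto intro: order_trans[OF norm_triangle_ineq])

lemma mv_add_left: "(A + B) *v w = A *v w + B *v (w::complex^'d::finite)"
  by (simp add: vec_eq_iff mv_nth distrib_right sum.distrib)
lemma mv_sum_list: "(\<Sum>x\<leftarrow>xs. f x) *v w = (\<Sum>x\<leftarrow>xs. f x *v (w::complex^'d::finite))"
  by (induct xs) (auto simp: mv_add_left vec_eq_iff mv_nth)
lemma vdot_sum_list_right: "vdot v (\<Sum>x\<leftarrow>xs. f x) = (\<Sum>x\<leftarrow>xs. vdot v (f x))"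
  by (induct xs) (auto simp: vdot_add_right)

lemma vdot_AA: "vdot w ((adj A ** A) *v z) = vdot (A *v w) (A *v z)"
  by (simp add: mv_mmult vdot_adj[of w "adj A"])

lemma norm_mv_sq: "complex_of_real (norm (A *v w) ^ 2) = vdot w ((adj A ** A) *v w)"
  by (simp add: vdot_AA vdot_self)

lemma trace_cpf:
  assumes "cpf \<Phi> As"
  shows "trace (\<Phi> X) = trace ((\<Sum>A\<leftarrow>As. adj A ** A) ** X)"
proof -
  have "trace (\<Phi> X) = (\<Sum>A\<leftarrow>As. trace (A ** X ** adj A))" using assms by (simp add: cpf_def trace_sum_list)
  also have "\<dots> = (\<Sum>A\<leftarrow>As. trace (adj A ** A ** X))"
    by (intro arg_cong[where f=sum_list] map_cong refl) (metis trace_mmult_comm matrix_mul_assoc)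
  also have "\<dots> = trace ((\<Sum>A\<leftarrow>As. adj A ** A) ** X)" by (simp add: sum_list_mmult_left trace_sum_list)
  finally show ?thesis .
qed

lemma of_real_sum_list: "complex_of_real (\<Sum>x\<leftarrow>xs. f x) = (\<Sum>x\<leftarrow>xs. complex_of_real (f x))"
  by (induct xs) auto

lemma quad_sum:
  "complex_of_real (\<Sum>A\<leftarrow>As. norm (A *v w) ^ 2) = vdot w ((\<Sum>A\<leftarrow>As. adj A ** A) *v w)"
  by (simp add: mv_sum_list vdot_sum_list_right of_real_sum_list norm_mv_sq del: of_real_power)

lemma col_quad: "(adj W ** M ** W) $ i $ i = vdot (\<chi> k. W $ k $ i) (M *v (\<chi> k. W $ k $ i))"
  by (simp add: mmult_nth vdot_def mv_nth sum_distrib_left sum_distrib_right mult.assoc mult.left_commute)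
     (rule sum.swap)

lemma td_bound:
  fixes D :: "'d::finite cmat"
  assumes c1: "cpf \<Phi>1 As" and c2: "cpf \<Phi>2 Bs" and tp: "\<And>X. trace (\<Phi>1 X) + trace (\<Phi>2 X) = trace X"
  shows "Re (trace (\<Phi>1 D)) \<le> trace_norm D"
proof -
  define P1 where "P1 = (\<Sum>A\<leftarrow>As. adj A ** A)"
  define P2 where "P2 = (\<Sum>A\<leftarrow>Bs. adj A ** A)"
  have tr1: "trace (\<Phi>1 X) = trace (P1 ** X)" for X unfolding P1_def by (rule trace_cpf[OF c1])
  have tr2: "trace (\<Phi>2 X) = trace (P2 ** X)" for X unfolding P2_def by (rule trace_cpf[OF c2])
  have PP: "P1 + P2 = mat 1"
  proof (rule trace_ext)
    fix B
    show "trace ((P1 + P2) ** B) = trace (mat 1 ** B)"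
      using tp[of B] by (simp add: mmult_add_left trace_add tr1 tr2)
  qed
  have q1: "(\<Sum>A\<leftarrow>As. norm (A *v w) ^ 2) \<le> norm w ^ 2" for w
  proof -
    have "complex_of_real ((\<Sum>A\<leftarrow>As. norm (A *v w) ^ 2) + (\<Sum>A\<leftarrow>Bs. norm (A *v w) ^ 2))
        = vdot w ((P1 + P2) *v w)"
      unfolding of_real_add quad_sum P1_def P2_def by (simp add: mv_add_left vdot_add_right)
    also have "\<dots> = complex_of_real (norm w ^ 2)" by (simp add: PP vdot_self)
    finally have "(\<Sum>A\<leftarrow>As. norm (A *v w) ^ 2) + (\<Sum>A\<leftarrow>Bs. norm (A *v w) ^ 2) = norm w ^ 2"
      by (simp only: of_real_eq_iff)
    moreover have "(\<Sum>A\<leftarrow>Bs. norm (A *v w) ^ 2) \<ge> 0" by (intro sum_list_nonneg) auto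
    ultimately show ?thesis by linarith
  qed
  let ?M = "adj D ** D"
  have hM: "hermitian ?M" by (simp add: hermitian_def adj_mult)
  obtain W \<mu> where W: "unitary W" and M: "?M = W ** diagm (\<lambda>i. complex_of_real (\<mu> i)) ** adj W"
    and mf: "\<And>f. mfun f ?M = W ** diagm (\<lambda>i. complex_of_real (f (\<mu> i))) ** adj W"
    using mfun_decomp[OF hM] by metis
  have psdM: "psd ?M"
    unfolding psd_vdot using hM by (simp add: vdot_AA vdot_self)
  have mu0: "\<mu> i \<ge> 0" for i using udiag_eigs_nonneg[OF W M psdM] .
  have tn: "trace_norm D = (\<Sum>i\<in>UNIV. sqrt (\<mu> i))"
    unfolding trace_norm_def mf udiag_trace[OF W] by (simp add: Re_sum)
  define w where "w i = (\<chi> k. W $ k $ i)" for i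
  have ww: "norm (w i) = 1" for i
  proof -
    have "vdot (w i) (w i) = 1"
      using col_quad[of W "mat 1" i] unitary_adj_mult[OF W] by (simp add: w_def mat_nth)
    then have "complex_of_real (norm (w i) ^ 2) = complex_of_real 1" by (simp add: vdot_self)
    then have "norm (w i) ^ 2 = 1" by (simp only: of_real_eq_iff)
    then show ?thesis using norm_ge_zero[of "w i"] by (auto simp: power2_eq_1_iff)
  qed
  have WMW: "adj W ** ?M ** W = diagm (\<lambda>i. complex_of_real (\<mu> i))"
  proof -
    have "adj W ** ?M ** W = (adj W ** W) ** diagm (\<lambda>i. complex_of_real (\<mu> i)) ** (adj W ** W)"
      unfolding M by (simp add: matrix_mul_assoc)
    then show ?thesis using unitary_adj_mult[OF W] by simp
  qed
  have nz: "norm (D *v w i) = sqrt (\<mu> i)" for i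
  proof -
    have "complex_of_real (norm (D *v w i) ^ 2) = vdot (w i) (?M *v w i)" by (rule norm_mv_sq)
    also have "\<dots> = (adj W ** ?M ** W) $ i $ i" by (simp add: col_quad w_def)
    also have "\<dots> = complex_of_real (\<mu> i)" by (simp add: WMW)
    finally have "norm (D *v w i) ^ 2 = \<mu> i" by (simp only: of_real_eq_iff)
    then show ?thesis by (metis norm_ge_zero real_sqrt_abs real_sqrt_unique abs_of_nonneg sqrt_le_D real_sqrt_pow2 mu0 power2_eq_square real_sqrt_mult_self)
  qed
  have trD: "trace (P1 ** D) = (\<Sum>i\<in>UNIV. vdot (w i) (P1 *v (D *v w i)))"
  proof -
    have "trace (P1 ** D) = trace ((P1 ** D) ** (W ** adj W))" using unitary_mult_adj[OF W] by simp
    also have "\<dots> = trace (adj W ** (P1 ** D) ** W)"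
      by (metis trace_mmult_comm matrix_mul_assoc)
    also have "\<dots> = (\<Sum>i\<in>UNIV. vdot (w i) ((P1 ** D) *v w i))" by (simp add: trace_nth col_quad w_def)
    finally show ?thesis by (simp add: mv_mmult)
  qed
  have each: "cmod (vdot (w i) (P1 *v (D *v w i))) \<le> sqrt (\<mu> i)" for i
  proof -
    define z where "z = D *v w i"
    have "vdot (w i) (P1 *v z) = (\<Sum>A\<leftarrow>As. vdot (A *v w i) (A *v z))"
      by (simp add: P1_def mv_sum_list vdot_sum_list_right vdot_AA)
    then have "cmod (vdot (w i) (P1 *v z)) \<le> (\<Sum>A\<leftarrow>As. cmod (vdot (A *v w i) (A *v z)))"
      using norm_sum_list_le by metis
    also have "\<dots> \<le> (\<Sum>A\<leftarrow>As. \<bar>norm (A *v w i)\<bar> * \<bar>norm (A *v z)\<bar>)"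
      by (intro sum_list_mono) (simp add: vdot_cs)
    also have "\<dots> \<le> sqrt (\<Sum>A\<leftarrow>As. (norm (A *v w i))^2) * sqrt (\<Sum>A\<leftarrow>As. (norm (A *v z))^2)"
      by (rule list_cs)
    also have "\<dots> \<le> sqrt (norm (w i) ^ 2) * sqrt (norm z ^ 2)"
      by (intro mult_mono real_sqrt_le_mono q1) (auto intro!: sum_list_nonneg)
    also have "\<dots> = sqrt (\<mu> i)" using mu0[of i] by (simp add: ww z_def nz)
    finally show ?thesis unfolding z_def .
  qed
  have "Re (trace (\<Phi>1 D)) = Re (\<Sum>i\<in>UNIV. vdot (w i) (P1 *v (D *v w i)))" by (simp add: tr1 trD)
  also have "\<dots> \<le> cmod (\<Sum>i\<in>UNIV. vdot (w i) (P1 *v (D *v w i)))" by (rule complex_Re_le_cmod)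
  also have "\<dots> \<le> (\<Sum>i\<in>UNIV. cmod (vdot (w i) (P1 *v (D *v w i))))" by (rule norm_sum)
  also have "\<dots> \<le> (\<Sum>i\<in>UNIV. sqrt (\<mu> i))" by (intro sum_mono each)
  finally show ?thesis by (simp add: tn)
qed



theorem lemma5p5:
  fixes n :: nat and H :: "'d::finite cmat" and \<beta> s :: real
    and I :: "'i set" and K :: "'i \<Rightarrow> 'd cmat"
    and U :: "real set" and Om :: "real \<Rightarrow> 'd cmat"
    and \<rho> :: "'d cmat" and \<epsilon> \<eta> :: real and Tburn KK :: nat
  assumes dim: "CARD('d) = 2 ^ n"
    and herm: "hermitian H" and beta: "\<beta> > 0"
    and N_chan: "is_channel I K" and M_chan: "is_channel U Om"
    and N_db: "detailed_balance s (gibbs \<beta> H) I K"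
    and M_db: "detailed_balance s (gibbs \<beta> H) U Om"
    and var_pos: "meas_var (gibbs \<beta> H) U Om > 0"
    and rho: "density_op \<rho>"
    and eps: "\<epsilon> > 0" and eta: "\<eta> > 0"
    and mix_exists: "\<exists>t. \<forall>\<sigma>. density_op \<sigma> \<longrightarrow>
                        trace_norm ((kraus_chan I K ^^ t) \<sigma> - gibbs \<beta> H) \<le> \<eta>"
    and burn: "Tburn = t_mix (gibbs \<beta> H) I K \<eta>"
    and K_large: "real KK \<ge> 2 * meas_var (gibbs \<beta> H) U Om / (\<epsilon>^2 * \<eta>)
                              * t_aut (gibbs \<beta> H) I K U Om KK"
  shows "traj_prob I K U Om \<rho> Tburn KK
           (\<lambda>es. \<bar>(\<Sum>e\<leftarrow>es. e) / real KK - meas_mean (gibbs \<beta> H) U Om\<bar> \<ge> \<epsilon>)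
         \<le> 2 * \<eta>"
proof -
  define R where "R = gibbs \<beta> H"
  define \<mu> where "\<mu> = meas_mean R U Om"
  define V where "V = meas_var R U Om"
  define \<sigma> where "\<sigma> = (kraus_chan I K ^^ Tburn) \<rho>"
  define L where "L = {us. set us \<subseteq> U \<and> length us = KK}"
  define Ev where "Ev us \<longleftrightarrow> \<epsilon> \<le> \<bar>sum_list us / real KK - \<mu>\<bar>" for us
  define A where "A = {us. set us \<subseteq> U \<and> length us = KK \<and> Ev us}"
  have psdR: "psd R" unfolding R_def by (rule gibbs_psd[OF herm])
  have statN: "kraus_chan I K R = R" using db_stationary[OF N_chan N_db[folded R_def] psdR] .
  have statM: "kraus_chan U Om R = R" using db_stationary[OF M_chan M_db[folded R_def] psdR] .
  have finU: "finite U" using M_chan by (simp add: is_channel_def)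
  have finL: "finite L" unfolding L_def using finite_lists_length_eq[OF finU] .
  have AL: "A \<subseteq> L" by (auto simp: A_def L_def)
  have finA: "finite A" using finL AL finite_subset by blast
  have Vp: "V > 0" using var_pos by (simp add: V_def R_def)
  have KKp: "KK > 0"
  proof (rule ccontr)
    assume "\<not> KK > 0"
    then have "KK = 0" by simp
    then have ta: "t_aut R I K U Om KK = 1/2" by (simp add: t_aut_def)
    have "real KK \<ge> 2 * V / (\<epsilon>^2 * \<eta>) * t_aut R I K U Om KK" using K_large by (simp only: R_def V_def)
    then have "real KK \<ge> V / (\<epsilon>^2 * \<eta>)" unfolding ta by simp
    moreover have "V / (\<epsilon>^2 * \<eta>) > 0" using Vp eps eta by simp
    ultimately show False using \<open>KK = 0\<close> by simp
  qed
  have w0: "Re (trace (traj I K U Om us R)) \<ge> 0" for us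
  proof -
    obtain As where "cpf (traj I K U Om us) As" using cpf_traj[OF N_chan M_chan] by blast
    then show ?thesis using cpf_trace_nonneg psdR by blast
  qed
  \<comment> \<open>Chebyshev under the stationary state\<close>
  have cheb: "(\<Sum>us\<in>A. Re (trace (traj I K U Om us R))) \<le> \<eta>"
  proof -
    have "(\<Sum>us\<in>A. Re (trace (traj I K U Om us R)))
        \<le> (\<Sum>us\<in>A. (sum_list us / real KK - \<mu>)^2 / \<epsilon>^2 * Re (trace (traj I K U Om us R)))"
    proof (intro sum_mono)
      fix us assume "us \<in> A"
      then have "\<epsilon> \<le> \<bar>sum_list us / real KK - \<mu>\<bar>" by (simp add: A_def Ev_def)
      then have "\<epsilon>^2 \<le> (sum_list us / real KK - \<mu>)^2"
        using eps by (metis abs_of_pos power2_abs power_mono less_imp_le)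
      then have "1 \<le> (sum_list us / real KK - \<mu>)^2 / \<epsilon>^2" using eps by simp
      then show "Re (trace (traj I K U Om us R)) \<le> (sum_list us / real KK - \<mu>)^2 / \<epsilon>^2 * Re (trace (traj I K U Om us R))"
        using mult_right_mono[OF \<open>1 \<le> (sum_list us / real KK - \<mu>)^2 / \<epsilon>^2\<close> w0[of us]] by simp
    qed
    also have "\<dots> \<le> (\<Sum>us\<in>L. (sum_list us / real KK - \<mu>)^2 / \<epsilon>^2 * Re (trace (traj I K U Om us R)))"
      using w0 by (intro sum_mono2[OF finL AL]) auto
    also have "\<dots> = (1 / \<epsilon>^2) * (\<Sum>us\<in>L. (sum_list us / real KK - \<mu>)^2 * Re (trace (traj I K U Om us R)))"
      by (simp add: sum_distrib_left)
    also have "\<dots> = (1 / \<epsilon>^2) * (2 * V * t_aut R I K U Om KK / real KK)"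
      unfolding L_def \<mu>_def V_def using second_moment[OF N_chan M_chan statN statM KKp var_pos[folded R_def]] by simp
    also have "\<dots> \<le> \<eta>"
    proof -
      have "2 * V / (\<epsilon>^2 * \<eta>) * t_aut R I K U Om KK \<le> real KK" using K_large by (simp add: R_def V_def)
      then have "2 * V * t_aut R I K U Om KK \<le> real KK * (\<epsilon>^2 * \<eta>)"
        using eps eta by (simp add: field_simps)
      then show ?thesis using eps eta KKp by (simp add: field_simps)
    qed
    finally show ?thesis .
  qed
  have tn: "trace_norm (\<sigma> - R) \<le> \<eta>"
  proof -
    have "\<forall>\<sigma>'. density_op \<sigma>' \<longrightarrow> trace_norm ((kraus_chan I K ^^ Tburn) \<sigma>' - R) \<le> \<eta>"
      unfolding burn t_mix_def R_def by (rule LeastI_ex[OF mix_exists])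
    then show ?thesis using rho by (simp add: \<sigma>_def)
  qed
  define \<Phi>1 where "\<Phi>1 X = (\<Sum>us\<in>A. traj I K U Om us X)" for X
  define \<Phi>2 where "\<Phi>2 X = (\<Sum>us\<in>L - A. traj I K U Om us X)" for X
  obtain As where c1: "cpf \<Phi>1 As"
    unfolding \<Phi>1_def[abs_def] using cpf_sum[OF finA] cpf_traj[OF N_chan M_chan] by blast
  obtain Bs where c2: "cpf \<Phi>2 Bs"
    unfolding \<Phi>2_def[abs_def] using cpf_sum[of "L - A"] finL cpf_traj[OF N_chan M_chan] by blast
  have tp: "trace (\<Phi>1 X) + trace (\<Phi>2 X) = trace X" for X
  proof -
    have "trace (\<Phi>1 X) + trace (\<Phi>2 X) = (\<Sum>us\<in>L. trace (traj I K U Om us X))"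
      unfolding \<Phi>1_def \<Phi>2_def trace_sum using finL AL
      by (metis (no_types, lifting) sum.subset_diff add.commute)
    also have "\<dots> = (\<Sum>us\<in>L. complex_of_real (\<Prod>i<KK. (\<lambda>_ _. 1) i (us!i)) * trace (traj I K U Om us X))"
      by simp
    also have "\<dots> = trace (Fh I K U Om (\<lambda>_ _. 1) KK X)" unfolding L_def by (rule traj_sum[OF finU])
    also have "\<dots> = trace X" by (rule trace_Fh_ones[OF N_chan M_chan statN statM]) simp
    finally show ?thesis .
  qed
  have td: "Re (trace (\<Phi>1 (\<sigma> - R))) \<le> \<eta>"
    using td_bound[OF c1 c2 tp, of "\<sigma> - R"] tn by linarith
  have split: "(\<Sum>us\<in>A. Re (trace (traj I K U Om us \<sigma>)))
      = (\<Sum>us\<in>A. Re (trace (traj I K U Om us R))) + Re (trace (\<Phi>1 (\<sigma> - R)))"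
    by (simp add: \<Phi>1_def lin_diff[OF lin_traj] trace_sum Re_sum trace_sub sum.distrib[symmetric])
  have "traj_prob I K U Om \<rho> Tburn KK (\<lambda>es. \<bar>(\<Sum>e\<leftarrow>es. e) / real KK - meas_mean (gibbs \<beta> H) U Om\<bar> \<ge> \<epsilon>)
      = (\<Sum>us\<in>A. Re (trace (traj I K U Om us \<sigma>)))"
    by (simp add: traj_prob_def A_def Ev_def \<sigma>_def \<mu>_def R_def)
  also have "\<dots> \<le> 2 * \<eta>" using split cheb td by linarith
  finally show ?thesis .
qed


end
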